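(* Let $(B,\mathbb{T},\omega)$ be a $C^*$-dynamical system with $B\subset B(H)$ for a Hilbert space $H$, and let $A$ be a maximal (abelian $\mathbb{T}$-invariant $*$-subalgebra) of $B$. Then $A'\cap B\subset A''$.
   Context: A $C^*$-dynamical system $(B,\mathbb{T},\omega)$: $B$ a $C^*$-algebra, $\omega:\mathbb{T}\to\mathrm{Aut}(B)$ a homomorphism with $t\mapsto\omega_t(b)$ norm-continuous for each $b$. A maximal (abelian $\mathbb{T}$-invariant $*$-subalgebra) is a $*$-subalgebra which is abelian, satisfies $\omega_t(A)\subset A$ for all $t$, and is maximal among such. $A'$ and $A''$ denote the commutant and bicommutant of $A$ in $B(H)$. *)

theory Defs
  imports "HOL-Analysis.Analysis"
begin

text \<open>A complex Hilbert space H is modelled as a real Hilbert space (type 'h of class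
real_inner and complete_space) together with an orthogonal complex structure J
(multiplication by i); the real inner product is the real part of the complex one.
Bounded complex-linear operators on H are the bounded real-linear operators commuting with J.\<close>

definition cstruct :: "('h::real_inner \<Rightarrow> 'h) \<Rightarrow> bool" where
  "cstruct J \<longleftrightarrow> bounded_linear J \<and> (\<forall>x. J (J x) = - x) \<and> (\<forall>x y. inner (J x) (J y) = inner x y)"

definition BH :: "('h::real_inner \<Rightarrow> 'h) \<Rightarrow> ('h \<Rightarrow>\<^sub>L 'h) set" where
  "BH J = {T. \<forall>x. blinfun_apply T (J x) = J (blinfun_apply T x)}"

definition cscale :: "('h::real_inner \<Rightarrow> 'h) \<Rightarrow> complex \<Rightarrow> ('h \<Rightarrow>\<^sub>L 'h) \<Rightarrow> ('h \<Rightarrow>\<^sub>L 'h)" where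
  "cscale J c T = Re c *\<^sub>R T + Im c *\<^sub>R (Blinfun J o\<^sub>L T)"

definition is_adj :: "('h::real_inner \<Rightarrow>\<^sub>L 'h) \<Rightarrow> ('h \<Rightarrow>\<^sub>L 'h) \<Rightarrow> bool" where
  "is_adj T S \<longleftrightarrow> (\<forall>x y. inner (blinfun_apply T x) y = inner x (blinfun_apply S y))"

definition star_subalg :: "('h::real_inner \<Rightarrow> 'h) \<Rightarrow> ('h \<Rightarrow>\<^sub>L 'h) set \<Rightarrow> bool" where
  "star_subalg J A \<longleftrightarrow> A \<subseteq> BH J \<and> 0 \<in> A
     \<and> (\<forall>a\<in>A. \<forall>b\<in>A. a + b \<in> A \<and> a o\<^sub>L b \<in> A)
     \<and> (\<forall>c a. a \<in> A \<longrightarrow> cscale J c a \<in> A)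
     \<and> (\<forall>a\<in>A. \<exists>s\<in>A. is_adj a s)"

definition concrete_cstar :: "('h::real_inner \<Rightarrow> 'h) \<Rightarrow> ('h \<Rightarrow>\<^sub>L 'h) set \<Rightarrow> bool" where
  "concrete_cstar J B \<longleftrightarrow> star_subalg J B \<and> closed B"

definition star_automorphism ::
  "('h::real_inner \<Rightarrow> 'h) \<Rightarrow> ('h \<Rightarrow>\<^sub>L 'h) set \<Rightarrow> (('h \<Rightarrow>\<^sub>L 'h) \<Rightarrow> ('h \<Rightarrow>\<^sub>L 'h)) \<Rightarrow> bool" where
  "star_automorphism J B \<alpha> \<longleftrightarrow> bij_betw \<alpha> B B
     \<and> (\<forall>a\<in>B. \<forall>b\<in>B. \<alpha> (a + b) = \<alpha> a + \<alpha> b \<and> \<alpha> (a o\<^sub>L b) = \<alpha> a o\<^sub>L \<alpha> b)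
     \<and> (\<forall>c. \<forall>a\<in>B. \<alpha> (cscale J c a) = cscale J c (\<alpha> a))
     \<and> (\<forall>a\<in>B. \<forall>s\<in>B. is_adj a s \<longrightarrow> is_adj (\<alpha> a) (\<alpha> s))"

text \<open>C*-dynamical system (B, T, \<omega>): the circle group T = R/2\<pi>Z is parametrised by
real t, with \<omega> 2\<pi>-periodic; \<omega> is a homomorphism into Aut(B), pointwise norm-continuous.\<close>
definition cstar_dyn_system ::
  "('h::real_inner \<Rightarrow> 'h) \<Rightarrow> ('h \<Rightarrow>\<^sub>L 'h) set \<Rightarrow> (real \<Rightarrow> ('h \<Rightarrow>\<^sub>L 'h) \<Rightarrow> ('h \<Rightarrow>\<^sub>L 'h)) \<Rightarrow> bool" where
  "cstar_dyn_system J B \<omega> \<longleftrightarrow> concrete_cstar J B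
     \<and> (\<forall>t. star_automorphism J B (\<omega> t))
     \<and> (\<forall>b\<in>B. \<omega> 0 b = b)
     \<and> (\<forall>s t. \<forall>b\<in>B. \<omega> (s + t) b = \<omega> s (\<omega> t b))
     \<and> (\<forall>t. \<forall>b\<in>B. \<omega> (t + 2 * pi) b = \<omega> t b)
     \<and> (\<forall>b\<in>B. continuous_on UNIV (\<lambda>t. \<omega> t b))"

definition abelian_inv_subalg ::
  "('h::real_inner \<Rightarrow> 'h) \<Rightarrow> ('h \<Rightarrow>\<^sub>L 'h) set \<Rightarrow> (real \<Rightarrow> ('h \<Rightarrow>\<^sub>L 'h) \<Rightarrow> ('h \<Rightarrow>\<^sub>L 'h))
    \<Rightarrow> ('h \<Rightarrow>\<^sub>L 'h) set \<Rightarrow> bool" where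
  "abelian_inv_subalg J B \<omega> A \<longleftrightarrow> star_subalg J A \<and> A \<subseteq> B
     \<and> (\<forall>a\<in>A. \<forall>b\<in>A. a o\<^sub>L b = b o\<^sub>L a)
     \<and> (\<forall>t. \<omega> t ` A \<subseteq> A)"

definition maximal_abelian_inv_subalg ::
  "('h::real_inner \<Rightarrow> 'h) \<Rightarrow> ('h \<Rightarrow>\<^sub>L 'h) set \<Rightarrow> (real \<Rightarrow> ('h \<Rightarrow>\<^sub>L 'h) \<Rightarrow> ('h \<Rightarrow>\<^sub>L 'h))
    \<Rightarrow> ('h \<Rightarrow>\<^sub>L 'h) set \<Rightarrow> bool" where
  "maximal_abelian_inv_subalg J B \<omega> A \<longleftrightarrow> abelian_inv_subalg J B \<omega> A
     \<and> (\<forall>C. abelian_inv_subalg J B \<omega> C \<and> A \<subseteq> C \<longrightarrow> C = A)"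

definition commutant :: "('h::real_inner \<Rightarrow> 'h) \<Rightarrow> ('h \<Rightarrow>\<^sub>L 'h) set \<Rightarrow> ('h \<Rightarrow>\<^sub>L 'h) set" where
  "commutant J S = {T \<in> BH J. \<forall>a\<in>S. T o\<^sub>L a = a o\<^sub>L T}"

end

theory Submission
  imports Defs
begin

lemma blinfun_Cauchy_convergent:
  fixes X :: "nat \<Rightarrow> 'a::real_normed_vector \<Rightarrow>\<^sub>L 'b::{real_normed_vector, complete_space}"
  assumes C: "Cauchy X"
  shows "convergent X"
proof -
  have pt: "Cauchy (\<lambda>n. X n x)" for x
  proof (rule CauchyI)
    fix e :: real assume e: "0 < e"
    have pos: "e / (norm x + 1) > 0" using e norm_ge_zero[of x] by (intro divide_pos_pos) linarith+
    obtain M where M: "\<And>m n. m \<ge> M \<Longrightarrow> n \<ge> M \<Longrightarrow> norm (X m - X n) < e / (norm x + 1)"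
      using CauchyD[OF C pos] by blast
    show "\<exists>M. \<forall>m\<ge>M. \<forall>n\<ge>M. norm (X m x - X n x) < e"
    proof (intro exI allI impI)
      fix m n assume "M \<le> m" "M \<le> n"
      have "norm (X m x - X n x) = norm ((X m - X n) x)" by (simp add: blinfun.diff_left)
      also have "\<dots> \<le> norm (X m - X n) * norm x" by (rule norm_blinfun)
      also have "\<dots> \<le> norm (X m - X n) * (norm x + 1)"
        by (intro mult_left_mono) auto
      also have "\<dots> < (e / (norm x + 1)) * (norm x + 1)"
        using M[OF \<open>M \<le> m\<close> \<open>M \<le> n\<close>]
        by (intro mult_strict_right_mono) (auto intro: add_nonneg_pos)
      also have "\<dots> = e"
      proof -
        have nz: "norm x + 1 \<noteq> 0" using norm_ge_zero[of x] by linarith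
        then show ?thesis by (simp only: times_divide_eq_left) (rule divide_eq_imp[OF nz refl])
      qed
      finally show "norm (X m x - X n x) < e" .
    qed
  qed
  then have "\<forall>x. \<exists>L. (\<lambda>n. X n x) \<longlonglongrightarrow> L"
    using Cauchy_convergent unfolding convergent_def by blast
  then have "\<exists>v. \<forall>x. (\<lambda>n. X n x) \<longlonglongrightarrow> v x" by (rule choice)
  then obtain v where v: "\<And>x. (\<lambda>n. X n x) \<longlonglongrightarrow> v x" by blast
  obtain K where K: "K > 0" "\<And>n. norm (X n) \<le> K"
    using Cauchy_Bseq[OF C] unfolding Bseq_def by auto
  have lin: "linear v"
  proof
    fix x y show "v (x + y) = v x + v y"
    proof -
      have "(\<lambda>n. X n (x + y)) \<longlonglongrightarrow> v x + v y"
        using tendsto_add[OF v[of x] v[of y]] by (simp add: blinfun.add_right)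
      then show ?thesis using LIMSEQ_unique[OF v[of "x+y"]] by blast
    qed
  next
    fix r x show "v (r *\<^sub>R x) = r *\<^sub>R v x"
    proof -
      have "(\<lambda>n. X n (r *\<^sub>R x)) \<longlonglongrightarrow> r *\<^sub>R v x"
        using tendsto_scaleR[OF tendsto_const v[of x]] by (simp add: blinfun.scaleR_right)
      then show ?thesis using LIMSEQ_unique[OF v[of "r *\<^sub>R x"]] by blast
    qed
  qed
  have bnd: "norm (v x) \<le> K * norm x" for x
  proof (rule Lim_bounded[OF tendsto_norm[OF v[of x]], of 0], intro allI impI)
    fix n show "norm (X n x) \<le> K * norm x"
      using norm_blinfun[of "X n" x] K(2)[of n] by (meson mult_right_mono norm_ge_zero order_trans)
  qed
  have blv: "bounded_linear v"
  proof (rule bounded_linear_intro)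
    show "v (x + y) = v x + v y" for x y using lin by (rule linear_add)
    show "v (r *\<^sub>R x) = r *\<^sub>R v x" for r x using lin by (rule linear_scale)
    show "norm (v x) \<le> norm x * K" for x using bnd[of x] by (simp add: mult.commute)
  qed
  have "X \<longlonglongrightarrow> Blinfun v"
  proof (rule LIMSEQ_I)
    fix e :: real assume e: "0 < e"
    obtain M where M: "\<And>m n. m \<ge> M \<Longrightarrow> n \<ge> M \<Longrightarrow> norm (X m - X n) < e / 2"
      using CauchyD[OF C, of "e/2"] e by auto
    show "\<exists>M. \<forall>n\<ge>M. norm (X n - Blinfun v) < e"
    proof (intro exI allI impI)
      fix n assume n: "M \<le> n"
      have "norm (X n - Blinfun v) \<le> e / 2"
      proof (rule norm_blinfun_bound)
        show "0 \<le> e / 2" using e by simp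
        fix x
        have "(\<lambda>m. X n x - X m x) \<longlonglongrightarrow> X n x - v x" by (intro tendsto_diff tendsto_const v)
        then have lim: "(\<lambda>m. norm (X n x - X m x)) \<longlonglongrightarrow> norm (X n x - v x)" by (rule tendsto_norm)
        have "norm (X n x - v x) \<le> e / 2 * norm x"
        proof (rule Lim_bounded[OF lim, of M], intro allI impI)
          fix m assume m: "M \<le> m"
          have "norm (X n x - X m x) = norm ((X n - X m) x)" by (simp add: blinfun.diff_left)
          also have "\<dots> \<le> norm (X n - X m) * norm x" by (rule norm_blinfun)
          also have "\<dots> \<le> e / 2 * norm x" using M[OF n m] by (intro mult_right_mono) auto
          finally show "norm (X n x - X m x) \<le> e / 2 * norm x" .
        qed
        then show "norm ((X n - Blinfun v) x) \<le> e / 2 * norm x"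
          by (simp add: blinfun.diff_left bounded_linear_Blinfun_apply[OF blv])
      qed
      then show "norm (X n - Blinfun v) < e" using e by simp
    qed
  qed
  then show ?thesis unfolding convergent_def by blast
qed


instance blinfun :: (real_normed_vector, "{real_normed_vector, complete_space}") banach
proof
  fix X :: "nat \<Rightarrow> 'a \<Rightarrow>\<^sub>L 'b"
  assume "Cauchy X"
  then show "convergent X" by (rule blinfun_Cauchy_convergent)
qed

lemma adj_unique: "is_adj T S \<Longrightarrow> is_adj T S' \<Longrightarrow> S = S'"
  unfolding is_adj_def
proof -
  assume a: "\<forall>x y. inner (T x) y = inner x (S y)" "\<forall>x y. inner (T x) y = inner x (S' y)"
  show "S = S'"
  proof (rule blinfun_eqI)
    fix y
    have "inner (S y - S' y) (S y) = inner (S y - S' y) (S' y)"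
      using a by metis
    then have "inner (S y - S' y) (S y - S' y) = 0"
      by (simp add: inner_diff_right)
    then show "S y = S' y" by simp
  qed
qed

lemma adj_sym: "is_adj T S \<Longrightarrow> is_adj S T"
  unfolding is_adj_def by (metis inner_commute)

lemma adj_comp: "is_adj T S \<Longrightarrow> is_adj T' S' \<Longrightarrow> is_adj (T o\<^sub>L T') (S' o\<^sub>L S)"
  unfolding is_adj_def by simp

lemma adj_add: "is_adj T S \<Longrightarrow> is_adj T' S' \<Longrightarrow> is_adj (T + T') (S + S')"
  unfolding is_adj_def by (simp add: blinfun.add_left inner_add_left inner_add_right)

lemma adj_diff: "is_adj T S \<Longrightarrow> is_adj T' S' \<Longrightarrow> is_adj (T - T') (S - S')"
  unfolding is_adj_def by (simp add: blinfun.diff_left inner_diff_left inner_diff_right)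

lemma adj_scaleR: "is_adj T S \<Longrightarrow> is_adj (r *\<^sub>R T) (r *\<^sub>R S)"
  unfolding is_adj_def by (simp add: blinfun.scaleR_left)

lemma adj_zero: "is_adj 0 0"
  unfolding is_adj_def by simp

lemma cstruct_lin: "cstruct J \<Longrightarrow> bounded_linear J"
  unfolding cstruct_def by auto

lemma cstruct_JJ: "cstruct J \<Longrightarrow> J (J x) = - x"
  unfolding cstruct_def by auto

lemma cstruct_inner: "cstruct J \<Longrightarrow> inner (J x) y = - inner x (J y)"
proof -
  assume c: "cstruct J"
  have "inner (J x) y = inner (J (J x)) (J y)" using c unfolding cstruct_def by metis
  also have "\<dots> = - inner x (J y)" using c by (simp add: cstruct_JJ)
  finally show ?thesis .
qed

lemma J_add: "cstruct J \<Longrightarrow> J (x + y) = J x + J y"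
  using cstruct_lin[of J] by (simp add: linear_simps)
lemma J_scale: "cstruct J \<Longrightarrow> J (r *\<^sub>R x) = r *\<^sub>R J x"
  using cstruct_lin[of J] by (simp add: linear_simps)
lemma J_minus: "cstruct J \<Longrightarrow> J (- x) = - J x"
  using cstruct_lin[of J] by (simp add: linear_simps)
lemma J_diff: "cstruct J \<Longrightarrow> J (x - y) = J x - J y"
  using cstruct_lin[of J] by (simp add: linear_simps)
lemma J_zero: "cstruct J \<Longrightarrow> J 0 = 0"
  using cstruct_lin[of J] by (simp add: linear_simps)

lemma BlJ_apply: "cstruct J \<Longrightarrow> blinfun_apply (Blinfun J) = J"
  by (simp add: bounded_linear_Blinfun_apply cstruct_lin)

lemma adj_BH: "cstruct J \<Longrightarrow> T \<in> BH J \<Longrightarrow> is_adj T S \<Longrightarrow> S \<in> BH J"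
proof -
  assume c: "cstruct J" and T: "T \<in> BH J" and a: "is_adj T S"
  show "S \<in> BH J" unfolding BH_def
  proof (safe)
    fix y
    have "\<forall>x. inner x (S (J y) - J (S y)) = 0"
    proof
      fix x
      have "inner x (S (J y)) = inner (T x) (J y)" using a unfolding is_adj_def by simp
      also have "\<dots> = - inner (J (T x)) y" using cstruct_inner[OF c, of "T x" y] by simp
      also have "\<dots> = - inner (T (J x)) y" using T unfolding BH_def by simp
      also have "\<dots> = - inner (J x) (S y)" using a unfolding is_adj_def by simp
      also have "\<dots> = inner x (J (S y))" using cstruct_inner[OF c, of x "S y"] by simp
      finally show "inner x (S (J y) - J (S y)) = 0" by (simp add: inner_diff_right)
    qed
    then show "S (J y) = J (S y)" by (metis eq_iff_diff_eq_0 inner_eq_zero_iff)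
  qed
qed

lemma cscale_apply: "cstruct J \<Longrightarrow> blinfun_apply (cscale J c T) x = Re c *\<^sub>R T x + Im c *\<^sub>R J (T x)"
  unfolding cscale_def by (simp add: BlJ_apply blinfun.add_left blinfun.scaleR_left)

lemma adj_J: "cstruct J \<Longrightarrow> is_adj (Blinfun J) (- Blinfun J)"
  unfolding is_adj_def by (simp add: BlJ_apply cstruct_inner blinfun.minus_left)

lemma adj_cscale: "cstruct J \<Longrightarrow> T \<in> BH J \<Longrightarrow> is_adj T S \<Longrightarrow> is_adj (cscale J c T) (cscale J (cnj c) S)"
proof -
  assume c: "cstruct J" and T: "T \<in> BH J" and a: "is_adj T S"
  have S: "S \<in> BH J" using adj_BH[OF c T a] .
  show ?thesis unfolding is_adj_def
  proof (intro allI)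
    fix x y
    have "inner (J (T x)) y = inner x (- S (J y))"
      using cstruct_inner[OF c, of "T x" y] a unfolding is_adj_def by simp
    also have "\<dots> = - inner x (J (S y))" using S unfolding BH_def by simp
    finally have e: "inner (J (T x)) y = - inner x (J (S y))" .
    show "inner (cscale J c T x) y = inner x (cscale J (cnj c) S y)"
      using a e unfolding is_adj_def by (simp add: cscale_apply[OF c] inner_add_left inner_add_right inner_diff_right)
  qed
qed

lemma cscale_of_real: "cscale J (complex_of_real r) T = r *\<^sub>R T"
  unfolding cscale_def by simp

lemma cscale_one: "cscale J 1 T = T"
  unfolding cscale_def by simp

lemma cscale_comp_left: "cstruct J \<Longrightarrow> cscale J c T o\<^sub>L S = cscale J c (T o\<^sub>L S)"
  by (rule blinfun_eqI) (simp add: cscale_apply)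

lemma cscale_comp_right: "cstruct J \<Longrightarrow> S \<in> BH J \<Longrightarrow> S o\<^sub>L cscale J c T = cscale J c (S o\<^sub>L T)"
  apply (rule blinfun_eqI)
  apply (simp add: cscale_apply BH_def)
  by (simp add: blinfun.add_right blinfun.scaleR_right J_add J_scale)

lemma cscale_mult: "cstruct J \<Longrightarrow> cscale J c (cscale J d T) = cscale J (c * d) T"
  apply (rule blinfun_eqI)
  apply (simp add: cscale_apply cstruct_JJ)
  by (simp add: J_add J_scale algebra_simps cstruct_JJ)

lemma cscale_add: "cstruct J \<Longrightarrow> cscale J c (T + S) = cscale J c T + cscale J c S"
  apply (rule blinfun_eqI)
  apply (simp add: cscale_apply blinfun.add_left)
  by (simp add: J_add algebra_simps)

lemma cscale_addc: "cstruct J \<Longrightarrow> cscale J (c + d) T = cscale J c T + cscale J d T"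
  apply (rule blinfun_eqI)
  by (simp add: cscale_apply blinfun.add_left algebra_simps)

lemma cstar_ineq:
  assumes a: "is_adj T S"
  shows "norm T ^ 2 \<le> norm (S o\<^sub>L T)"
proof -
  have "\<forall>u. norm (T u) \<le> sqrt (norm (S o\<^sub>L T)) * norm u"
  proof
    fix u
    have "norm (T u) ^ 2 = inner (T u) (T u)" by (simp add: power2_norm_eq_inner)
    also have "\<dots> = inner u (S (T u))" using a unfolding is_adj_def by simp
    also have "\<dots> \<le> norm u * norm (S (T u))" using Cauchy_Schwarz_ineq2 by (meson abs_le_D1)
    also have "\<dots> \<le> norm u * (norm (S o\<^sub>L T) * norm u)"
      using norm_blinfun[of "S o\<^sub>L T" u] by (simp add: mult_left_mono)
    also have "\<dots> = (sqrt (norm (S o\<^sub>L T)) * norm u) ^ 2" by (simp add: power2_eq_square)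
    finally have "norm (T u) ^ 2 \<le> (sqrt (norm (S o\<^sub>L T)) * norm u) ^ 2" .
    then show "norm (T u) \<le> sqrt (norm (S o\<^sub>L T)) * norm u"
      using power2_le_imp_le by fastforce
  qed
  then have "norm T \<le> sqrt (norm (S o\<^sub>L T))" by (intro norm_blinfun_bound) auto
  then have "norm T ^ 2 \<le> sqrt (norm (S o\<^sub>L T)) ^ 2" by (intro power_mono) auto
  then show ?thesis by simp
qed

lemma adj_norm_le:
  assumes a: "is_adj T S"
  shows "norm T \<le> norm S"
proof -
  have "norm T ^ 2 \<le> norm S * norm T"
    using cstar_ineq[OF a] norm_blinfun_compose[of S T] by linarith
  then show ?thesis
    by (cases "norm T = 0") (auto simp: power2_eq_square)
qed

lemma adj_norm: "is_adj T S \<Longrightarrow> norm S = norm T"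
  using adj_norm_le adj_sym by (metis order_antisym)

lemma sa_bound:
  assumes a: "is_adj T T" and c: "0 \<le> c" and b: "\<And>u. \<bar>inner (T u) u\<bar> \<le> c * inner u u"
  shows "norm T \<le> c"
proof (rule norm_blinfun_bound[OF c])
  fix u
  have pol: "4 * inner (T u) v = inner (T (u + v)) (u + v) - inner (T (u - v)) (u - v)" for v
  proof -
    have "inner (T v) u = inner (T u) v" using a unfolding is_adj_def by (metis inner_commute)
    then show ?thesis
      by (simp add: blinfun.add_right blinfun.diff_right inner_add_left inner_add_right
          inner_diff_left inner_diff_right algebra_simps)
  qed
  have key: "4 * inner (T u) v \<le> 2 * c * (inner u u + inner v v)" for v
  proof -
    have "4 * inner (T u) v \<le> \<bar>inner (T (u + v)) (u + v)\<bar> + \<bar>inner (T (u - v)) (u - v)\<bar>"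
      using pol[of v] by linarith
    also have "\<dots> \<le> c * inner (u + v) (u + v) + c * inner (u - v) (u - v)"
      using b[of "u+v"] b[of "u-v"] by linarith
    also have "\<dots> = 2 * c * (inner u u + inner v v)"
      by (simp add: inner_add_left inner_add_right inner_diff_left inner_diff_right algebra_simps inner_commute)
    finally show ?thesis .
  qed
  show "norm (T u) \<le> c * norm u"
  proof (cases "T u = 0")
    case True then show ?thesis using c by simp
  next
    case False
    define v where "v = (norm u / norm (T u)) *\<^sub>R T u"
    have nTu: "norm (T u) > 0" using False by simp
    have "inner (T u) v = norm u * norm (T u)"
      using nTu by (simp add: v_def power2_norm_eq_inner[symmetric] power2_eq_square)
    moreover have "inner v v = norm u ^ 2"
      using nTu by (simp add: v_def power2_norm_eq_inner[symmetric] power2_eq_square)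
    moreover have "inner u u = norm u ^ 2" by (simp add: power2_norm_eq_inner)
    ultimately have "4 * (norm u * norm (T u)) \<le> 2 * c * (2 * norm u ^ 2)"
      using key[of v] by simp
    then have "norm u * norm (T u) \<le> norm u * (c * norm u)"
      by (simp add: power2_eq_square algebra_simps)
    then show ?thesis
      by (cases "norm u = 0") (auto)
  qed
qed

lemma bl_apply_left: "bounded_linear (\<lambda>k::'a::real_normed_vector \<Rightarrow>\<^sub>L 'b::real_normed_vector. blinfun_apply k x)"
  using bounded_bilinear.bounded_linear_left[OF bounded_bilinear_blinfun_apply] by simp

lemma bl_inner_left: "bounded_linear (\<lambda>k::'a::real_inner \<Rightarrow>\<^sub>L 'b::real_inner. inner (blinfun_apply k x) y)"
  by (rule bounded_linear_compose[OF bounded_linear_inner_left bl_apply_left])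

lemma bl_inner_right: "bounded_linear (\<lambda>k::'a::real_inner \<Rightarrow>\<^sub>L 'b::real_inner. inner x (blinfun_apply k y))"
  by (rule bounded_linear_compose[OF bounded_linear_inner_right bl_apply_left])

lemma closed_sa: "closed {k::'a::real_inner \<Rightarrow>\<^sub>L 'a. is_adj k k}"
proof -
  have "{k::'a \<Rightarrow>\<^sub>L 'a. is_adj k k} = (\<Inter>x. \<Inter>y. {k. inner (blinfun_apply k x) y = inner x (blinfun_apply k y)})"
    unfolding is_adj_def by auto
  moreover have "closed {k::'a \<Rightarrow>\<^sub>L 'a. inner (blinfun_apply k x) y = inner x (blinfun_apply k y)}" for x y
    by (intro closed_Collect_eq linear_continuous_on bl_inner_left bl_inner_right)
  ultimately show ?thesis by (auto intro!: closed_INT)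
qed

lemma comp_diff_expand: "(k o\<^sub>L k) - (k' o\<^sub>L k') = (k o\<^sub>L (k - k')) + ((k - k') o\<^sub>L k')"
  apply (rule blinfun_eqI)
  apply (simp only: blinfun_apply_blinfun_compose blinfun.diff_left blinfun.add_left blinfun.diff_right)
  by simp

locale cstar_setting =
  fixes J :: "'h::{real_inner, complete_space} \<Rightarrow> 'h" and B :: "('h \<Rightarrow>\<^sub>L 'h) set"
  assumes cJ: "cstruct J" and cB: "concrete_cstar J B"
begin

lemma B_BH: "B \<subseteq> BH J" using cB unfolding concrete_cstar_def star_subalg_def by auto
lemma B_zero: "0 \<in> B" using cB unfolding concrete_cstar_def star_subalg_def by auto
lemma B_add: "a \<in> B \<Longrightarrow> b \<in> B \<Longrightarrow> a + b \<in> B" using cB unfolding concrete_cstar_def star_subalg_def by auto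
lemma B_comp: "a \<in> B \<Longrightarrow> b \<in> B \<Longrightarrow> a o\<^sub>L b \<in> B" using cB unfolding concrete_cstar_def star_subalg_def by auto
lemma B_cscale: "a \<in> B \<Longrightarrow> cscale J c a \<in> B" using cB unfolding concrete_cstar_def star_subalg_def by auto
lemma B_adj: "a \<in> B \<Longrightarrow> \<exists>s\<in>B. is_adj a s" using cB unfolding concrete_cstar_def star_subalg_def by auto
lemma B_closed: "closed B" using cB unfolding concrete_cstar_def by auto
lemma B_scaleR: "a \<in> B \<Longrightarrow> r *\<^sub>R a \<in> B" using B_cscale[of a "complex_of_real r"] by (simp add: cscale_of_real)
lemma B_subspace: "subspace B" unfolding subspace_def using B_zero B_add B_scaleR by auto
lemma B_minus: "a \<in> B \<Longrightarrow> - a \<in> B" using B_scaleR[of a "-1"] by simp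
lemma B_diff: "a \<in> B \<Longrightarrow> b \<in> B \<Longrightarrow> a - b \<in> B" using B_add B_minus by (metis diff_conv_add_uminus)

lemma sqrt_exists:
  assumes h: "h \<in> B" "is_adj h h" "norm h < 1"
  shows "\<exists>k\<in>B. is_adj k k \<and> h + (k o\<^sub>L k) = 2 *\<^sub>R k"
proof -
  define \<rho> where "\<rho> = (1 + norm h) / 2"
  have \<rho>: "0 \<le> \<rho>" "\<rho> < 1" "(norm h + \<rho> * \<rho>) / 2 \<le> \<rho>"
  proof -
    show "0 \<le> \<rho>" "\<rho> < 1" using h(3) by (auto simp: \<rho>_def)
    have "(1 - \<rho>) * (1 - \<rho>) = (1 - norm h) * ((1 - norm h) / 4)" by (simp add: \<rho>_def field_simps)
    also have "\<dots> \<le> (1 - norm h) * 1" using h(3) norm_ge_zero[of h] by (intro mult_left_mono) (simp_all add: field_simps)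
    finally have "(1 - \<rho>) * (1 - \<rho>) \<le> 1 - norm h" by simp
    then show "(norm h + \<rho> * \<rho>) / 2 \<le> \<rho>" by (simp add: algebra_simps)
  qed
  define S where "S = {k \<in> B. is_adj k k \<and> norm k \<le> \<rho>}"
  define f where "f k = (1/2::real) *\<^sub>R (h + (k o\<^sub>L k))" for k
  have "\<exists>!k\<in>S. f k = k"
  proof (rule Banach_fix)
    have "closed S"
    proof -
      have "S = B \<inter> {k. is_adj k k} \<inter> cball 0 \<rho>" by (auto simp: S_def)
      then show ?thesis using B_closed closed_sa by auto
    qed
    then show "complete S" by (rule complete_eq_closed[THEN iffD2])
    show "S \<noteq> {}" using B_zero \<rho> adj_zero by (auto simp: S_def)
    show "0 \<le> \<rho>" "\<rho> < 1" by fact+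
    show "f ` S \<subseteq> S"
    proof
      fix y assume "y \<in> f ` S"
      then obtain k where k: "k \<in> S" "y = f k" by auto
      have nk: "norm k \<le> \<rho>" using k by (simp add: S_def)
      have "norm (k o\<^sub>L k) \<le> norm k * norm k" by (rule norm_blinfun_compose)
      also have "\<dots> \<le> \<rho> * \<rho>" using nk \<rho>(1) by (intro mult_mono) auto
      finally have "norm (k o\<^sub>L k) \<le> \<rho> * \<rho>" .
      then have "norm (h + (k o\<^sub>L k)) \<le> norm h + \<rho> * \<rho>"
        using norm_triangle_ineq[of h "k o\<^sub>L k"] by linarith
      then have "norm (f k) \<le> \<rho>" using \<rho>(3) by (simp add: f_def)
      have kB: "k \<in> B" "is_adj k k" using k by (auto simp: S_def)
      have "f k \<in> B" unfolding f_def by (intro B_scaleR B_add B_comp h(1) kB(1))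
      moreover have "is_adj (f k) (f k)" unfolding f_def
        by (intro adj_scaleR adj_add h(2) adj_comp kB(2))
      ultimately show "y \<in> S" using k(2) \<open>norm (f k) \<le> \<rho>\<close> unfolding S_def by blast
    qed
    fix x y assume xy: "x \<in> S" "y \<in> S"
    have "f x - f y = (1/2::real) *\<^sub>R ((x o\<^sub>L x) - (y o\<^sub>L y))" unfolding f_def
      by (simp only: scaleR_diff_right[symmetric]) simp
    then have "dist (f x) (f y) = (1/2) * norm ((x o\<^sub>L (x - y)) + ((x - y) o\<^sub>L y))"
      by (simp add: dist_norm comp_diff_expand)
    also have "\<dots> \<le> (1/2) * (norm x * norm (x - y) + norm (x - y) * norm y)"
    proof -
      have "norm ((x o\<^sub>L (x - y)) + ((x - y) o\<^sub>L y)) \<le> norm (x o\<^sub>L (x - y)) + norm ((x - y) o\<^sub>L y)"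
        by (rule norm_triangle_ineq)
      also have "\<dots> \<le> norm x * norm (x - y) + norm (x - y) * norm y"
        by (intro add_mono norm_blinfun_compose)
      finally show ?thesis by simp
    qed
    also have "\<dots> \<le> (1/2) * (\<rho> * norm (x - y) + norm (x - y) * \<rho>)"
    proof -
      have "norm x \<le> \<rho>" "norm y \<le> \<rho>" using xy by (auto simp: S_def)
      then have "norm x * norm (x - y) \<le> \<rho> * norm (x - y)" "norm (x - y) * norm y \<le> norm (x - y) * \<rho>"
        by (auto intro: mult_right_mono mult_left_mono)
      then show ?thesis by (rule mult_left_mono[OF add_mono]) simp_all
    qed
    also have "\<dots> = \<rho> * dist x y" by (simp add: dist_norm algebra_simps)
    finally show "dist (f x) (f y) \<le> \<rho> * dist x y" .
  qed
  then obtain k where k: "k \<in> S" "f k = k" by auto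
  then have "h + (k o\<^sub>L k) = 2 *\<^sub>R k"
  proof -
    have "h + (k o\<^sub>L k) = 2 *\<^sub>R ((1/2::real) *\<^sub>R (h + (k o\<^sub>L k)))" by simp
    then show ?thesis using k(2) unfolding f_def by simp
  qed
  then show ?thesis using k by (auto simp: S_def)
qed

end

context cstar_setting
begin

lemma field_le_eps: "(\<And>e::real. 0 < e \<Longrightarrow> x \<le> y + e) \<Longrightarrow> x \<le> y"
  by (rule field_le_epsilon)

context
  fixes \<alpha> :: "('h \<Rightarrow>\<^sub>L 'h) \<Rightarrow> ('h \<Rightarrow>\<^sub>L 'h)"
  assumes sa: "star_automorphism J B \<alpha>"
begin

lemma al_B: "a \<in> B \<Longrightarrow> \<alpha> a \<in> B" using sa unfolding star_automorphism_def bij_betw_def by auto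
lemma al_add: "a \<in> B \<Longrightarrow> b \<in> B \<Longrightarrow> \<alpha> (a + b) = \<alpha> a + \<alpha> b" using sa unfolding star_automorphism_def by auto
lemma al_comp: "a \<in> B \<Longrightarrow> b \<in> B \<Longrightarrow> \<alpha> (a o\<^sub>L b) = \<alpha> a o\<^sub>L \<alpha> b" using sa unfolding star_automorphism_def by auto
lemma al_cscale: "a \<in> B \<Longrightarrow> \<alpha> (cscale J c a) = cscale J c (\<alpha> a)" using sa unfolding star_automorphism_def by auto
lemma al_adj: "a \<in> B \<Longrightarrow> s \<in> B \<Longrightarrow> is_adj a s \<Longrightarrow> is_adj (\<alpha> a) (\<alpha> s)" using sa unfolding star_automorphism_def by auto
lemma al_scaleR: "a \<in> B \<Longrightarrow> \<alpha> (r *\<^sub>R a) = r *\<^sub>R \<alpha> a" using al_cscale[of a "complex_of_real r"] by (simp add: cscale_of_real)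
lemma al_zero: "\<alpha> 0 = 0" using al_scaleR[OF B_zero, of 0] by simp
lemma al_minus: "a \<in> B \<Longrightarrow> \<alpha> (- a) = - \<alpha> a" using al_scaleR[of a "-1"] by simp
lemma al_diff: "a \<in> B \<Longrightarrow> b \<in> B \<Longrightarrow> \<alpha> (a - b) = \<alpha> a - \<alpha> b"
  using al_add[of a "- b"] al_minus[of b] B_minus[of b] by simp

lemma al_num:
  assumes h: "h \<in> B" "is_adj h h" "norm h < 1"
  shows "inner (\<alpha> h u) u \<le> inner u u"
proof -
  obtain k where k: "k \<in> B" "is_adj k k" "h + (k o\<^sub>L k) = 2 *\<^sub>R k" using sqrt_exists[OF h] by blast
  define K where "K = \<alpha> k"
  have KK: "is_adj K K" unfolding K_def using al_adj k by blast
  have "\<alpha> h + (K o\<^sub>L K) = 2 *\<^sub>R K"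
    using arg_cong[OF k(3), of \<alpha>] al_add[OF h(1) B_comp[OF k(1) k(1)]] al_comp[OF k(1) k(1)] al_scaleR[OF k(1)]
    unfolding K_def by simp
  then have eq: "\<alpha> h u = 2 *\<^sub>R K u - K (K u)"
    by (metis add_diff_cancel_right' blinfun.diff_left blinfun.scaleR_left blinfun_apply_blinfun_compose)
  have i1: "inner (K (K u)) u = inner (K u) (K u)" using KK unfolding is_adj_def by (metis inner_commute)
  have "0 \<le> inner (u - K u) (u - K u)" by simp
  also have "\<dots> = inner u u - 2 * inner (K u) u + inner (K u) (K u)"
    by (simp add: inner_diff_left inner_diff_right inner_commute)
  finally have "0 \<le> inner u u - 2 * inner (K u) u + inner (K u) (K u)" .
  moreover have "inner (\<alpha> h u) u = 2 * inner (K u) u - inner (K u) (K u)"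
    using eq i1 by (simp add: inner_diff_left)
  ultimately show ?thesis by linarith
qed

lemma al_sa_norm1:
  assumes h: "h \<in> B" "is_adj h h" "norm h < 1"
  shows "norm (\<alpha> h) \<le> 1"
proof (rule sa_bound)
  show "is_adj (\<alpha> h) (\<alpha> h)" using al_adj h by blast
  show "0 \<le> (1::real)" by simp
  fix u
  have a: "inner (\<alpha> h u) u \<le> inner u u" by (rule al_num[OF h])
  have hm: "- h \<in> B" "is_adj (- h) (- h)" "norm (- h) < 1"
    using h B_minus adj_scaleR[OF h(2), of "-1"] by auto
  have "inner (\<alpha> (- h) u) u \<le> inner u u" by (rule al_num[OF hm])
  then have b: "- inner (\<alpha> h u) u \<le> inner u u" using al_minus[OF h(1)] by (simp add: blinfun.minus_left)
  show "\<bar>inner (\<alpha> h u) u\<bar> \<le> 1 * inner u u" using a b by simp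
qed

lemma al_sa_norm:
  assumes h: "h \<in> B" "is_adj h h"
  shows "norm (\<alpha> h) \<le> norm h"
proof (rule field_le_eps)
  fix e :: real assume e: "0 < e"
  define c where "c = norm h + e"
  have c: "c > 0" "norm h < c" using e by (auto simp: c_def add_nonneg_pos)
  have h': "(1/c) *\<^sub>R h \<in> B" "is_adj ((1/c) *\<^sub>R h) ((1/c) *\<^sub>R h)" "norm ((1/c) *\<^sub>R h) < 1"
    using h c B_scaleR adj_scaleR by (auto simp: field_simps)
  have "norm (\<alpha> ((1/c) *\<^sub>R h)) \<le> 1" by (rule al_sa_norm1[OF h'])
  then have "(1/c) * norm (\<alpha> h) \<le> 1" using al_scaleR[OF h(1)] c by simp
  then have "norm (\<alpha> h) \<le> c" using c by (simp add: field_simps)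
  then show "norm (\<alpha> h) \<le> norm h + e" by (simp add: c_def)
qed

lemma al_norm:
  assumes a: "a \<in> B"
  shows "norm (\<alpha> a) \<le> norm a"
proof -
  obtain s where s: "s \<in> B" "is_adj a s" using B_adj[OF a] by blast
  have sa': "is_adj (s o\<^sub>L a) (s o\<^sub>L a)" using adj_comp[OF adj_sym[OF s(2)] s(2)] by simp
  have "norm (\<alpha> a) ^ 2 \<le> norm (\<alpha> s o\<^sub>L \<alpha> a)" by (rule cstar_ineq[OF al_adj[OF a s(1) s(2)]])
  also have "\<dots> = norm (\<alpha> (s o\<^sub>L a))" using al_comp[OF s(1) a] by simp
  also have "\<dots> \<le> norm (s o\<^sub>L a)" by (rule al_sa_norm[OF B_comp[OF s(1) a] sa'])
  also have "\<dots> \<le> norm s * norm a" by (rule norm_blinfun_compose)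
  also have "\<dots> = norm a ^ 2" using adj_norm[OF s(2)] by (simp add: power2_eq_square)
  finally show ?thesis using power2_le_imp_le by (metis norm_ge_zero)
qed

end
end

lemma int_in_subspace:
  fixes f :: "real \<Rightarrow> 'v::real_normed_vector"
  assumes S: "subspace S" "closed S" and I: "(f has_integral I) {a..b}" and fS: "\<And>t. t \<in> {a..b} \<Longrightarrow> f t \<in> S"
  shows "I \<in> S"
proof -
  have "\<forall>e>0. \<exists>y\<in>S. dist y I < e"
  proof (intro allI impI)
    fix e :: real assume e: "0 < e"
    obtain \<gamma> where g: "gauge \<gamma>" and gD0: "\<forall>\<D>. \<D> tagged_division_of {a..b} \<and> \<gamma> fine \<D> \<longrightarrow>
        norm (sum (\<lambda>(x,k). Henstock_Kurzweil_Integration.content k *\<^sub>R f x) \<D> - I) < e"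
      using has_integral_real[THEN iffD1, OF I, rule_format, OF e] by blast
    have gD: "norm (sum (\<lambda>(x,k). Henstock_Kurzweil_Integration.content k *\<^sub>R f x) \<D> - I) < e"
      if "\<D> tagged_division_of {a..b}" "\<gamma> fine \<D>" for \<D>
      using gD0 that by blast
    obtain \<D> where D: "\<D> tagged_division_of {a..b}" "\<gamma> fine \<D>" using fine_division_exists_real[OF g] by blast
    have "sum (\<lambda>(x,k). Henstock_Kurzweil_Integration.content k *\<^sub>R f x) \<D> \<in> S"
    proof (rule subspace_sum[OF S(1)])
      fix p assume p: "p \<in> \<D>"
      obtain x k where xk: "p = (x, k)" by (cases p)
      have "x \<in> {a..b}" using D(1) p xk by blast
      then have "f x \<in> S" by (rule fS)
      then show "(\<lambda>(x,k). Henstock_Kurzweil_Integration.content k *\<^sub>R f x) p \<in> S" using xk S(1) by (simp add: subspace_scale)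
    qed
    then show "\<exists>y\<in>S. dist y I < e" using gD[OF D] by (auto simp: dist_norm)
  qed
  then show ?thesis using closed_approachable[OF S(2)] by blast
qed

lemma lin_on_sum:
  assumes S: "subspace S" and add: "\<And>x y. x \<in> S \<Longrightarrow> y \<in> S \<Longrightarrow> L (x + y) = L x + L y"
    and L0: "L 0 = 0"
  shows "finite D \<Longrightarrow> (\<And>d. d \<in> D \<Longrightarrow> g d \<in> S) \<Longrightarrow> L (sum g D) = (\<Sum>d\<in>D. L (g d))"
proof (induction D rule: finite_induct)
  case empty then show ?case using L0 by simp
next
  case (insert d D)
  have "sum g D \<in> S" using insert.prems by (intro subspace_sum[OF S]) auto
  then show ?case using insert add[of "g d" "sum g D"] by simp
qed

lemma int_linear_on:
  fixes f :: "real \<Rightarrow> 'v::real_normed_vector" and L :: "'v \<Rightarrow> 'w::real_normed_vector"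
  assumes S: "subspace S" and I: "(f has_integral I) {a..b}" and fS: "\<And>t. t \<in> {a..b} \<Longrightarrow> f t \<in> S"
    and IS: "I \<in> S"
    and add: "\<And>x y. x \<in> S \<Longrightarrow> y \<in> S \<Longrightarrow> L (x + y) = L x + L y"
    and scl: "\<And>r x. x \<in> S \<Longrightarrow> L (r *\<^sub>R x) = r *\<^sub>R L x"
    and bnd: "\<And>x. x \<in> S \<Longrightarrow> norm (L x) \<le> C * norm x" and C: "0 < C"
  shows "((\<lambda>t. L (f t)) has_integral L I) {a..b}"
  unfolding has_integral_real
proof (intro allI impI)
  fix e :: real assume e: "0 < e"
  have L0: "L 0 = 0" using scl[of 0 0] S by (simp add: subspace_0)
  have eC: "0 < e / C" using e C by simp
  obtain \<gamma> where g: "gauge \<gamma>" and gD0: "\<forall>\<D>. \<D> tagged_division_of {a..b} \<and> \<gamma> fine \<D> \<longrightarrow>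
      norm (sum (\<lambda>(x,k). Henstock_Kurzweil_Integration.content k *\<^sub>R f x) \<D> - I) < e / C"
    using has_integral_real[THEN iffD1, OF I, rule_format, OF eC] by blast
  have gD: "norm (sum (\<lambda>(x,k). Henstock_Kurzweil_Integration.content k *\<^sub>R f x) \<D> - I) < e / C"
    if "\<D> tagged_division_of {a..b}" "\<gamma> fine \<D>" for \<D>
    using gD0 that by blast
  show "\<exists>\<gamma>. gauge \<gamma> \<and> (\<forall>\<D>. \<D> tagged_division_of {a..b} \<and> \<gamma> fine \<D> \<longrightarrow>
        norm (sum (\<lambda>(x,k). Henstock_Kurzweil_Integration.content k *\<^sub>R L (f x)) \<D> - L I) < e)"
  proof (intro exI conjI allI impI)
    show "gauge \<gamma>" by fact
    fix \<D> assume D: "\<D> tagged_division_of {a..b} \<and> \<gamma> fine \<D>"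
    have terms: "(\<lambda>(x,k). Henstock_Kurzweil_Integration.content k *\<^sub>R f x) p \<in> S" if p: "p \<in> \<D>" for p
    proof -
      obtain x k where xk: "p = (x, k)" by (cases p)
      have "x \<in> {a..b}" using D p xk by blast
      then have "f x \<in> S" by (rule fS)
      then show ?thesis using xk S by (simp add: subspace_scale)
    qed
    define R where "R = sum (\<lambda>(x,k). Henstock_Kurzweil_Integration.content k *\<^sub>R f x) \<D>"
    have RS: "R \<in> S" unfolding R_def using terms by (intro subspace_sum[OF S]) auto
    have "L R = (\<Sum>p\<in>\<D>. L ((\<lambda>(x,k). Henstock_Kurzweil_Integration.content k *\<^sub>R f x) p))"
      unfolding R_def using D terms by (intro lin_on_sum[OF S add L0]) auto
    also have "\<dots> = sum (\<lambda>(x,k). Henstock_Kurzweil_Integration.content k *\<^sub>R L (f x)) \<D>"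
    proof (rule sum.cong[OF refl])
      fix p assume p: "p \<in> \<D>"
      obtain x k where xk: "p = (x, k)" by (cases p)
      have "x \<in> {a..b}" using D p xk by blast
      then have "f x \<in> S" by (rule fS)
      then show "L ((\<lambda>(x,k). Henstock_Kurzweil_Integration.content k *\<^sub>R f x) p) = (\<lambda>(x,k). Henstock_Kurzweil_Integration.content k *\<^sub>R L (f x)) p"
        using xk scl by simp
    qed
    finally have LR: "L R = sum (\<lambda>(x,k). Henstock_Kurzweil_Integration.content k *\<^sub>R L (f x)) \<D>" .
    have dS: "R - I \<in> S" using RS IS S by (simp add: subspace_diff)
    have "L R = L (R - I) + L I" using add[OF dS IS] by simp
    then have "L R - L I = L (R - I)" by simp
    then have "norm (sum (\<lambda>(x,k). Henstock_Kurzweil_Integration.content k *\<^sub>R L (f x)) \<D> - L I) = norm (L (R - I))" using LR by simp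
    also have "\<dots> \<le> C * norm (R - I)" using bnd[OF dS] .
    also have "\<dots> < C * (e / C)" using gD D C unfolding R_def by (intro mult_strict_left_mono) auto
    also have "\<dots> = e" using C by simp
    finally show "norm (sum (\<lambda>(x,k). Henstock_Kurzweil_Integration.content k *\<^sub>R L (f x)) \<D> - L I) < e" .
  qed
qed

lemma periodic_nat:
  assumes per: "\<And>t. G (t + 2 * pi) = G t"
  shows "G (t + 2 * pi * real k) = G t"
proof (induction k)
  case 0 then show ?case by simp
next
  case (Suc k)
  have "t + 2 * pi * real (Suc k) = (t + 2 * pi * real k) + 2 * pi" by (simp add: algebra_simps)
  then have "G (t + 2 * pi * real (Suc k)) = G ((t + 2 * pi * real k) + 2 * pi)" by (rule arg_cong)
  also have "\<dots> = G (t + 2 * pi * real k)" by (rule per)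
  also have "\<dots> = G t" by (rule Suc.IH)
  finally show ?case .
qed

lemma periodic_int:
  assumes per: "\<And>t. G (t + 2 * pi) = G t"
  shows "G (t + 2 * pi * real_of_int k) = G t"
proof (cases "k \<ge> 0")
  case True
  then have "t + 2 * pi * real_of_int k = t + 2 * pi * real (nat k)" by simp
  then have "G (t + 2 * pi * real_of_int k) = G (t + 2 * pi * real (nat k))" by (rule arg_cong)
  also have "\<dots> = G t" by (rule periodic_nat[of G, OF per])
  finally show ?thesis .
next
  case False
  then have "t = (t + 2 * pi * real_of_int k) + 2 * pi * real (nat (- k))" by simp
  then have "G t = G ((t + 2 * pi * real_of_int k) + 2 * pi * real (nat (- k)))" by (rule arg_cong)
  also have "\<dots> = G (t + 2 * pi * real_of_int k)" by (rule periodic_nat[of G, OF per])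
  finally show ?thesis by simp
qed

lemma shift_period_aux:
  fixes G :: "real \<Rightarrow> 'v::banach"
  assumes cont: "continuous_on UNIV G" and per: "\<And>t. G (t + 2 * pi) = G t"
    and s: "0 \<le> s" "s \<le> 2 * pi"
  shows "integral {0..2*pi} (\<lambda>t. G (t + s)) = integral {0..2*pi} G"
proof -
  have intg: "G integrable_on {a..b}" for a b
    by (rule integrable_continuous_real) (rule continuous_on_subset[OF cont], simp)
  have "integral {0..2*pi} (\<lambda>t. G (t + s)) = integral {0..2*pi} (G \<circ> (+) s)"
    by (simp add: o_def add.commute)
  also have "\<dots> = integral {0 + s..2*pi + s} G" by (rule integral_shift_Icc_real)
  also have "\<dots> = integral {s..2*pi} G + integral {2*pi..2*pi+s} G"
    using s Henstock_Kurzweil_Integration.integral_combine[where a=s and c="2*pi" and b="2*pi+s" and f=G] intg by simp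
  also have "integral {2*pi..2*pi+s} G = integral {0..s} G"
  proof -
    have "integral {0..s} (G \<circ> (+) (2*pi)) = integral {0..s} G"
    proof (rule integral_cong)
      fix x
      have "(G \<circ> (+) (2*pi)) x = G (x + 2 * pi)" by (simp add: add.commute)
      also have "\<dots> = G x" by (rule per)
      finally show "(G \<circ> (+) (2*pi)) x = G x" .
    qed
    then have "integral {0..s} G = integral {0..s} (G \<circ> (+) (2*pi))" by simp
    also have "\<dots> = integral {0 + 2*pi..s + 2*pi} G" by (rule integral_shift_Icc_real)
    finally show ?thesis by (simp add: add.commute)
  qed
  also have "integral {s..2*pi} G + integral {0..s} G = integral {0..2*pi} G"
    using s Henstock_Kurzweil_Integration.integral_combine[where a=0 and c=s and b="2*pi" and f=G] intg by (simp add: add.commute)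
  finally show ?thesis .
qed

lemma shift_period:
  fixes G :: "real \<Rightarrow> 'v::banach"
  assumes cont: "continuous_on UNIV G" and per: "\<And>t. G (t + 2 * pi) = G t"
  shows "integral {0..2*pi} (\<lambda>t. G (t + s)) = integral {0..2*pi} G"
proof -
  define k where "k = \<lfloor>s / (2 * pi)\<rfloor>"
  define s0 where "s0 = s - 2 * pi * real_of_int k"
  have s0: "0 \<le> s0" "s0 \<le> 2 * pi"
  proof -
    have "real_of_int k \<le> s / (2 * pi)" "s / (2 * pi) < real_of_int k + 1" unfolding k_def by linarith+
    then have "2 * pi * real_of_int k \<le> s" "s < 2 * pi * (real_of_int k + 1)"
      by (simp_all add: field_simps)
    then show "0 \<le> s0" "s0 \<le> 2 * pi" unfolding s0_def by (simp_all add: algebra_simps)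
  qed
  have "(\<lambda>t. G (t + s)) = (\<lambda>t. G (t + s0))"
  proof
    fix t
    have "G (t + s) = G ((t + s0) + 2 * pi * real_of_int k)" by (simp add: s0_def)
    also have "\<dots> = G (t + s0)" by (rule periodic_int[of G, OF per])
    finally show "G (t + s) = G (t + s0)" .
  qed
  then show ?thesis using shift_period_aux[OF cont per s0] by simp
qed

lemma comp_assoc: "(a o\<^sub>L b) o\<^sub>L c = a o\<^sub>L (b o\<^sub>L c)"
  by (rule blinfun_eqI) simp
lemma comp_add_right: "a o\<^sub>L (b + c) = (a o\<^sub>L b) + (a o\<^sub>L c)"
  by (rule blinfun_eqI) (simp add: blinfun.add_left blinfun.add_right)
lemma comp_add_left: "(b + c) o\<^sub>L a = (b o\<^sub>L a) + (c o\<^sub>L a)"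
  by (rule blinfun_eqI) (simp add: blinfun.add_left)

locale dyn_setting = cstar_setting J B for J :: "'h::{real_inner, complete_space} \<Rightarrow> 'h" and B +
  fixes \<omega> :: "real \<Rightarrow> ('h \<Rightarrow>\<^sub>L 'h) \<Rightarrow> ('h \<Rightarrow>\<^sub>L 'h)" and A :: "('h \<Rightarrow>\<^sub>L 'h) set"
  assumes dyn: "cstar_dyn_system J B \<omega>" and mx: "maximal_abelian_inv_subalg J B \<omega> A"
begin

lemma om_sa: "star_automorphism J B (\<omega> t)" using dyn unfolding cstar_dyn_system_def by auto
lemma om_0: "b \<in> B \<Longrightarrow> \<omega> 0 b = b" using dyn unfolding cstar_dyn_system_def by auto
lemma om_plus: "b \<in> B \<Longrightarrow> \<omega> (s + t) b = \<omega> s (\<omega> t b)" using dyn unfolding cstar_dyn_system_def by auto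
lemma om_per: "b \<in> B \<Longrightarrow> \<omega> (t + 2 * pi) b = \<omega> t b" using dyn unfolding cstar_dyn_system_def by auto
lemma om_cont: "b \<in> B \<Longrightarrow> continuous_on UNIV (\<lambda>t. \<omega> t b)" using dyn unfolding cstar_dyn_system_def by auto

lemma om_B: "a \<in> B \<Longrightarrow> \<omega> t a \<in> B" by (rule al_B[OF om_sa])
lemma om_add: "a \<in> B \<Longrightarrow> b \<in> B \<Longrightarrow> \<omega> t (a + b) = \<omega> t a + \<omega> t b" by (rule al_add[OF om_sa])
lemma om_comp: "a \<in> B \<Longrightarrow> b \<in> B \<Longrightarrow> \<omega> t (a o\<^sub>L b) = \<omega> t a o\<^sub>L \<omega> t b" by (rule al_comp[OF om_sa])
lemma om_cscale: "a \<in> B \<Longrightarrow> \<omega> t (cscale J c a) = cscale J c (\<omega> t a)" by (rule al_cscale[OF om_sa])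
lemma om_adj: "a \<in> B \<Longrightarrow> s \<in> B \<Longrightarrow> is_adj a s \<Longrightarrow> is_adj (\<omega> t a) (\<omega> t s)" by (rule al_adj[OF om_sa])
lemma om_scaleR: "a \<in> B \<Longrightarrow> \<omega> t (r *\<^sub>R a) = r *\<^sub>R \<omega> t a" by (rule al_scaleR[OF om_sa])
lemma om_diff: "a \<in> B \<Longrightarrow> b \<in> B \<Longrightarrow> \<omega> t (a - b) = \<omega> t a - \<omega> t b" by (rule al_diff[OF om_sa])
lemma om_norm: "a \<in> B \<Longrightarrow> norm (\<omega> t a) \<le> norm a" by (rule al_norm[OF om_sa])

lemma A_sub: "star_subalg J A" using mx unfolding maximal_abelian_inv_subalg_def abelian_inv_subalg_def by auto
lemma A_B: "A \<subseteq> B" using mx unfolding maximal_abelian_inv_subalg_def abelian_inv_subalg_def by auto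
lemma A_comm: "a \<in> A \<Longrightarrow> b \<in> A \<Longrightarrow> a o\<^sub>L b = b o\<^sub>L a" using mx unfolding maximal_abelian_inv_subalg_def abelian_inv_subalg_def by auto
lemma A_inv: "a \<in> A \<Longrightarrow> \<omega> t a \<in> A" using mx unfolding maximal_abelian_inv_subalg_def abelian_inv_subalg_def by blast
lemma A_max: "abelian_inv_subalg J B \<omega> C \<Longrightarrow> A \<subseteq> C \<Longrightarrow> C = A" using mx unfolding maximal_abelian_inv_subalg_def by auto
lemma A_zero: "0 \<in> A" using A_sub unfolding star_subalg_def by auto
lemma A_adj: "a \<in> A \<Longrightarrow> \<exists>s\<in>A. is_adj a s" using A_sub unfolding star_subalg_def by auto

inductive_set gen :: "('h \<Rightarrow>\<^sub>L 'h) set \<Rightarrow> ('h \<Rightarrow>\<^sub>L 'h) set" for G where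
  base: "g \<in> G \<Longrightarrow> g \<in> gen G"
| add: "a \<in> gen G \<Longrightarrow> b \<in> gen G \<Longrightarrow> a + b \<in> gen G"
| comp: "a \<in> gen G \<Longrightarrow> b \<in> gen G \<Longrightarrow> (a o\<^sub>L b) \<in> gen G"
| scl: "a \<in> gen G \<Longrightarrow> cscale J c a \<in> gen G"

lemma gen_max:
  assumes GB: "G \<subseteq> B" and AG: "A \<subseteq> G"
    and comm: "\<And>g h. g \<in> G \<Longrightarrow> h \<in> G \<Longrightarrow> g o\<^sub>L h = h o\<^sub>L g"
    and adjG: "\<And>g. g \<in> G \<Longrightarrow> \<exists>s\<in>G. is_adj g s"
    and inv: "\<And>t g. g \<in> G \<Longrightarrow> \<omega> t g \<in> gen G"
  shows "G \<subseteq> A"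
proof -
  have gB: "c \<in> B" if "c \<in> gen G" for c
    using that by (induction rule: gen.induct) (use GB in \<open>auto intro: B_add B_comp B_cscale\<close>)
  have gBH: "c \<in> BH J" if "c \<in> gen G" for c using gB[OF that] B_BH by auto
  have comm1: "g o\<^sub>L c = c o\<^sub>L g" if g: "g \<in> G" and c: "c \<in> gen G" for g c
    using c
  proof (induction rule: gen.induct)
    case (base h) then show ?case using comm g by blast
  next
    case (add a b) then show ?case by (simp add: comp_add_right comp_add_left)
  next
    case (comp a b)
    have "g o\<^sub>L (a o\<^sub>L b) = (g o\<^sub>L a) o\<^sub>L b" by (simp add: comp_assoc)
    also have "\<dots> = a o\<^sub>L (g o\<^sub>L b)" using comp.IH(1) by (simp add: comp_assoc)
    also have "\<dots> = (a o\<^sub>L b) o\<^sub>L g" using comp.IH(2) by (simp add: comp_assoc)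
    finally show ?case .
  next
    case (scl a c)
    have gH: "g \<in> BH J" using g GB B_BH by auto
    have "g o\<^sub>L cscale J c a = cscale J c (g o\<^sub>L a)" by (rule cscale_comp_right[OF cJ gH])
    also have "\<dots> = cscale J c (a o\<^sub>L g)" using scl.IH by simp
    also have "\<dots> = cscale J c a o\<^sub>L g" by (rule cscale_comp_left[OF cJ, symmetric])
    finally show ?case .
  qed
  have comm2: "c o\<^sub>L d = d o\<^sub>L c" if c: "c \<in> gen G" and d: "d \<in> gen G" for c d
    using d
  proof (induction rule: gen.induct)
    case (base h) then show ?case using comm1[OF _ c] by simp
  next
    case (add a b) then show ?case by (simp add: comp_add_right comp_add_left)
  next
    case (comp a b)
    have "c o\<^sub>L (a o\<^sub>L b) = (c o\<^sub>L a) o\<^sub>L b" by (simp add: comp_assoc)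
    also have "\<dots> = a o\<^sub>L (c o\<^sub>L b)" using comp.IH(1) by (simp add: comp_assoc)
    also have "\<dots> = (a o\<^sub>L b) o\<^sub>L c" using comp.IH(2) by (simp add: comp_assoc)
    finally show ?case .
  next
    case (scl a z)
    have "c o\<^sub>L cscale J z a = cscale J z (c o\<^sub>L a)" by (rule cscale_comp_right[OF cJ gBH[OF c]])
    also have "\<dots> = cscale J z (a o\<^sub>L c)" using scl.IH by simp
    also have "\<dots> = cscale J z a o\<^sub>L c" by (rule cscale_comp_left[OF cJ, symmetric])
    finally show ?case .
  qed
  have gadj: "\<exists>s\<in>gen G. is_adj c s" if c: "c \<in> gen G" for c
    using c
  proof (induction rule: gen.induct)
    case (base g) then show ?case using adjG gen.base by blast
  next
    case (add a b)
    then obtain sa sb where "sa \<in> gen G" "is_adj a sa" "sb \<in> gen G" "is_adj b sb" by blast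
    then show ?case using adj_add gen.add by blast
  next
    case (comp a b)
    then obtain sa sb where "sa \<in> gen G" "is_adj a sa" "sb \<in> gen G" "is_adj b sb" by blast
    then show ?case using adj_comp gen.comp by blast
  next
    case (scl a z)
    then obtain sa where "sa \<in> gen G" "is_adj a sa" by blast
    then show ?case using adj_cscale[OF cJ gBH[OF scl.hyps]] gen.scl by blast
  qed
  have ginv: "\<omega> t c \<in> gen G" if c: "c \<in> gen G" for c t
    using c
  proof (induction rule: gen.induct)
    case (base g) then show ?case by (rule inv)
  next
    case (add a b) then show ?case using om_add gB gen.add by simp
  next
    case (comp a b) then show ?case using om_comp gB gen.comp by simp
  next
    case (scl a z) then show ?case using om_cscale gB gen.scl by simp
  qed
  have AgG: "A \<subseteq> gen G" using AG gen.base by blast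
  have s1: "gen G \<subseteq> BH J" using gBH by blast
  have s2: "0 \<in> gen G" using A_zero AgG by blast
  have s3: "\<forall>a\<in>gen G. \<forall>b\<in>gen G. a + b \<in> gen G \<and> (a o\<^sub>L b) \<in> gen G" using gen.add gen.comp by blast
  have s4: "\<forall>c a. a \<in> gen G \<longrightarrow> cscale J c a \<in> gen G" using gen.scl by blast
  have s5: "\<forall>a\<in>gen G. \<exists>s\<in>gen G. is_adj a s" using gadj by blast
  have s6: "gen G \<subseteq> B" using gB by blast
  have s7: "\<forall>a\<in>gen G. \<forall>b\<in>gen G. (a o\<^sub>L b) = (b o\<^sub>L a)" using comm2 by blast
  have s8: "\<forall>t. \<omega> t ` gen G \<subseteq> gen G" using ginv by blast
  have "abelian_inv_subalg J B \<omega> (gen G)"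
    unfolding abelian_inv_subalg_def star_subalg_def
    by (intro conjI s1 s2 s3 s4 s5 s6 s7 s8)
  then have "gen G = A" using A_max AgG by blast
  then show ?thesis using AG gen.base by blast
qed

lemma eigen_in_A:
  assumes NB: "N \<in> B" and MB: "M \<in> B"
    and NA: "\<And>a. a \<in> A \<Longrightarrow> N o\<^sub>L a = a o\<^sub>L N" and MA: "\<And>a. a \<in> A \<Longrightarrow> M o\<^sub>L a = a o\<^sub>L M"
    and adj: "is_adj N M" and nor: "N o\<^sub>L M = M o\<^sub>L N"
    and eN: "\<And>t. \<exists>c. \<omega> t N = cscale J c N" and eM: "\<And>t. \<exists>c. \<omega> t M = cscale J c M"
  shows "N \<in> A"
proof -
  define G where "G = A \<union> {N, M}"
  have "G \<subseteq> A"
  proof (rule gen_max)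
    show "G \<subseteq> B" using A_B NB MB by (auto simp: G_def)
    show "A \<subseteq> G" by (auto simp: G_def)
    show "g o\<^sub>L h = h o\<^sub>L g" if g: "g \<in> G" and h: "h \<in> G" for g h
    proof -
      consider "g \<in> A" | "g = N" | "g = M" using g by (auto simp: G_def)
      note gc = this
      consider "h \<in> A" | "h = N" | "h = M" using h by (auto simp: G_def)
      note hc = this
      show ?thesis
      proof (cases rule: gc)
        case 1
        then show ?thesis
        proof (cases rule: hc)
          case 1 then show ?thesis using \<open>g \<in> A\<close> A_comm by blast
        next
          case 2 then show ?thesis using \<open>g \<in> A\<close> NA[of g] by simp
        next
          case 3 then show ?thesis using \<open>g \<in> A\<close> MA[of g] by simp
        qed
      next
        case 2
        then show ?thesis
        proof (cases rule: hc)
          case 1 then show ?thesis using \<open>g = N\<close> NA[of h] by simp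
        next
          case 2 then show ?thesis using \<open>g = N\<close> by simp
        next
          case 3 then show ?thesis using \<open>g = N\<close> nor by simp
        qed
      next
        case 3
        then show ?thesis
        proof (cases rule: hc)
          case 1 then show ?thesis using \<open>g = M\<close> MA[of h] by simp
        next
          case 2 then show ?thesis using \<open>g = M\<close> nor by simp
        next
          case 3 then show ?thesis using \<open>g = M\<close> by simp
        qed
      qed
    qed
    show "\<exists>s\<in>G. is_adj g s" if g: "g \<in> G" for g
    proof -
      consider "g \<in> A" | "g = N" | "g = M" using g by (auto simp: G_def)
      then show ?thesis
      proof cases
        case 1
        then obtain s where "s \<in> A" "is_adj g s" using A_adj by blast
        then show ?thesis by (auto simp: G_def)
      next
        case 2 then show ?thesis using adj by (auto simp: G_def)
      next
        case 3 then show ?thesis using adj_sym[OF adj] by (auto simp: G_def)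
      qed
    qed
    show "\<omega> t g \<in> gen G" if g: "g \<in> G" for t g
    proof -
      consider "g \<in> A" | "g = N" | "g = M" using g by (auto simp: G_def)
      then show ?thesis
      proof cases
        case 1 then show ?thesis using A_inv gen.base by (auto simp: G_def)
      next
        case 2
        obtain c where "\<omega> t N = cscale J c N" using eN by blast
        then show ?thesis using 2 gen.base gen.scl by (auto simp: G_def)
      next
        case 3
        obtain c where "\<omega> t M = cscale J c M" using eM by blast
        then show ?thesis using 3 gen.base gen.scl by (auto simp: G_def)
      qed
    qed
  qed
  then show ?thesis by (auto simp: G_def)
qed

end

primrec pw :: "('a::real_normed_vector \<Rightarrow>\<^sub>L 'a) \<Rightarrow> nat \<Rightarrow> ('a \<Rightarrow>\<^sub>L 'a)" where
  "pw T 0 = id_blinfun"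
| "pw T (Suc n) = T o\<^sub>L pw T n"

lemma comp_id_left[simp]: "id_blinfun o\<^sub>L T = T" by (rule blinfun_eqI) simp
lemma comp_id_right[simp]: "T o\<^sub>L id_blinfun = T" by (rule blinfun_eqI) simp
lemma comp_scaleR_left: "(r *\<^sub>R T) o\<^sub>L S = r *\<^sub>R (T o\<^sub>L S)" by (rule blinfun_eqI) (simp add: blinfun.scaleR_left)
lemma comp_scaleR_right: "T o\<^sub>L (r *\<^sub>R S) = r *\<^sub>R (T o\<^sub>L S)" by (rule blinfun_eqI) (simp add: blinfun.scaleR_left blinfun.scaleR_right)
lemma comp_diff_right: "a o\<^sub>L (b - c) = (a o\<^sub>L b) - (a o\<^sub>L c)"
  by (rule blinfun_eqI) (simp add: blinfun.diff_left blinfun.diff_right)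
lemma comp_diff_left: "(b - c) o\<^sub>L a = (b o\<^sub>L a) - (c o\<^sub>L a)"
  by (rule blinfun_eqI) (simp add: blinfun.diff_left)
lemma comp_zero_left[simp]: "0 o\<^sub>L a = 0" by (rule blinfun_eqI) simp
lemma comp_zero_right[simp]: "a o\<^sub>L 0 = 0" by (rule blinfun_eqI) simp

lemma pw_comm: "T o\<^sub>L S = S o\<^sub>L T \<Longrightarrow> T o\<^sub>L pw S n = pw S n o\<^sub>L T"
proof (induction n)
  case 0 then show ?case by simp
next
  case (Suc n)
  have "T o\<^sub>L pw S (Suc n) = (T o\<^sub>L S) o\<^sub>L pw S n" by (simp add: comp_assoc)
  also have "\<dots> = S o\<^sub>L (T o\<^sub>L pw S n)" using Suc.prems by (simp add: comp_assoc)
  also have "\<dots> = pw S (Suc n) o\<^sub>L T" using Suc by (simp add: comp_assoc)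
  finally show ?case .
qed

lemma pw_add: "pw T (m + n) = pw T m o\<^sub>L pw T n"
  by (induction m) (simp_all add: comp_assoc)

lemma pw_norm: "norm (pw T n) \<le> norm T ^ n"
proof (induction n)
  case 0 then show ?case using norm_blinfun_id_le by simp
next
  case (Suc n)
  have "norm (pw T (Suc n)) \<le> norm T * norm (pw T n)" by (simp add: norm_blinfun_compose)
  also have "\<dots> \<le> norm T * norm T ^ n" using Suc by (intro mult_left_mono) auto
  finally show ?case by simp
qed

lemma pw_sa: "is_adj E E \<Longrightarrow> is_adj (pw E n) (pw E n)"
proof (induction n)
  case 0 then show ?case by (simp add: is_adj_def)
next
  case (Suc n)
  have "is_adj (E o\<^sub>L pw E n) (pw E n o\<^sub>L E)" using adj_comp[OF Suc.prems Suc.IH[OF Suc.prems]] .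
  moreover have "pw E n o\<^sub>L E = E o\<^sub>L pw E n" using pw_comm[of E E n] by simp
  ultimately show ?case by simp
qed

lemma pw_pow2: "is_adj E E \<Longrightarrow> norm E ^ (2 ^ m) \<le> norm (pw E (2 ^ m))"
proof (induction m)
  case 0 then show ?case by simp
next
  case (Suc m)
  have "norm E ^ (2 ^ Suc m) = (norm E ^ (2 ^ m)) ^ 2" by (simp add: power_mult[symmetric] mult.commute)
  also have "\<dots> \<le> norm (pw E (2 ^ m)) ^ 2" using Suc by (intro power_mono) auto
  also have "\<dots> \<le> norm (pw E (2 ^ m) o\<^sub>L pw E (2 ^ m))" by (rule cstar_ineq[OF pw_sa[OF Suc.prems]])
  also have "pw E (2 ^ m) o\<^sub>L pw E (2 ^ m) = pw E (2 ^ Suc m)" by (simp add: pw_add[symmetric] mult_2)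
  finally show ?case .
qed

lemma ks_normal:
  fixes x s :: "'h::real_inner \<Rightarrow>\<^sub>L 'h"
  assumes adj: "is_adj x s" and ca: "x o\<^sub>L (s o\<^sub>L x) = (s o\<^sub>L x) o\<^sub>L x" and cb: "x o\<^sub>L (x o\<^sub>L s) = (x o\<^sub>L s) o\<^sub>L x"
  shows "x o\<^sub>L s = s o\<^sub>L x"
proof -
  define a where "a = s o\<^sub>L x"
  define b where "b = x o\<^sub>L s"
  have aa: "is_adj a a" unfolding a_def using adj_comp[OF adj_sym[OF adj] adj] .
  have bb: "is_adj b b" unfolding b_def using adj_comp[OF adj adj_sym[OF adj]] .
  have xa: "x o\<^sub>L a = a o\<^sub>L x" using ca by (simp add: a_def)
  have xb: "x o\<^sub>L b = b o\<^sub>L x" using cb by (simp add: b_def)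
  have sa: "s o\<^sub>L a = a o\<^sub>L s"
  proof -
    have "is_adj (x o\<^sub>L a) (a o\<^sub>L s)" using adj_comp[OF adj aa] .
    moreover have "is_adj (a o\<^sub>L x) (s o\<^sub>L a)" using adj_comp[OF aa adj] .
    ultimately show ?thesis using xa adj_unique by metis
  qed
  have sb: "s o\<^sub>L b = b o\<^sub>L s"
  proof -
    have "is_adj (x o\<^sub>L b) (b o\<^sub>L s)" using adj_comp[OF adj bb] .
    moreover have "is_adj (b o\<^sub>L x) (s o\<^sub>L b)" using adj_comp[OF bb adj] .
    ultimately show ?thesis using xb adj_unique by metis
  qed
  define E where "E = b - a"
  have EE: "is_adj E E" unfolding E_def using adj_diff[OF bb aa] .
  have xE: "x o\<^sub>L E = E o\<^sub>L x" using xa xb by (simp add: E_def comp_diff_left comp_diff_right)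
  have sE: "s o\<^sub>L E = E o\<^sub>L s" using sa sb by (simp add: E_def comp_diff_left comp_diff_right)
  define \<delta> where "\<delta> y = (x o\<^sub>L y) - (y o\<^sub>L x)" for y
  have \<delta>s: "\<delta> s = E" by (simp add: \<delta>_def E_def a_def b_def)
  have \<delta>_comp: "\<delta> (P o\<^sub>L Q) = (\<delta> P o\<^sub>L Q) + (P o\<^sub>L \<delta> Q)" for P Q
    by (rule blinfun_eqI) (simp add: \<delta>_def blinfun.diff_left blinfun.add_left blinfun.diff_right)
  have \<delta>_scale: "\<delta> (r *\<^sub>R P) = r *\<^sub>R \<delta> P" for r P
    by (simp add: \<delta>_def comp_scaleR_left comp_scaleR_right scaleR_diff_right)
  have \<delta>E: "\<delta> (pw E j) = 0" for j using pw_comm[OF xE, of j] by (simp add: \<delta>_def)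
  have Es: "E o\<^sub>L pw s n = pw s n o\<^sub>L E" for n using pw_comm[of E s n] sE by simp
  have \<delta>pw: "\<delta> (pw s (Suc m)) = real (Suc m) *\<^sub>R (pw s m o\<^sub>L E)" for m
  proof (induction m)
    case 0
    have "\<delta> (pw s (Suc 0)) = \<delta> s" by simp
    then show ?case using \<delta>s by simp
  next
    case (Suc m)
    have "\<delta> (pw s (Suc (Suc m))) = (\<delta> s o\<^sub>L pw s (Suc m)) + (s o\<^sub>L \<delta> (pw s (Suc m)))"
      by (simp add: \<delta>_comp)
    also have "\<dots> = (pw s (Suc m) o\<^sub>L E) + real (Suc m) *\<^sub>R (pw s (Suc m) o\<^sub>L E)"
      using Suc \<delta>s Es[of "Suc m"] by (simp add: comp_scaleR_right comp_assoc)
    also have "\<dots> = (1 + real (Suc m)) *\<^sub>R (pw s (Suc m) o\<^sub>L E)"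
      by (simp only: scaleR_left_distrib scaleR_one)
    also have "\<dots> = real (Suc (Suc m)) *\<^sub>R (pw s (Suc m) o\<^sub>L E)"
      by simp
    finally show ?case .
  qed
  have \<delta>Q: "\<delta> (pw s (Suc m) o\<^sub>L pw E j) = real (Suc m) *\<^sub>R (pw s m o\<^sub>L pw E (Suc j))" for m j
    unfolding \<delta>_comp[of "pw s (Suc m)"]
    by (simp only: \<delta>pw \<delta>E comp_zero_right add_0_right comp_scaleR_left comp_assoc) (simp only: pw.simps(2))
  have main: "(\<delta> ^^ j) (pw s (m + j)) = (fact (m + j) / fact m) *\<^sub>R (pw s m o\<^sub>L pw E j)" for j m
  proof (induction j arbitrary: m)
    case 0 then show ?case by simp
  next
    case (Suc j)
    have "(\<delta> ^^ Suc j) (pw s (m + Suc j)) = \<delta> ((\<delta> ^^ j) (pw s (Suc m + j)))" by simp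
    also have "\<dots> = \<delta> ((fact (Suc m + j) / fact (Suc m)) *\<^sub>R (pw s (Suc m) o\<^sub>L pw E j))" by (simp only: Suc.IH[of "Suc m"])
    also have "\<dots> = (fact (Suc m + j) / fact (Suc m)) *\<^sub>R (real (Suc m) *\<^sub>R (pw s m o\<^sub>L pw E (Suc j)))"
      by (simp only: \<delta>_scale \<delta>Q)
    also have "\<dots> = ((fact (Suc m + j) / fact (Suc m)) * real (Suc m)) *\<^sub>R (pw s m o\<^sub>L pw E (Suc j))"
      by (simp only: scaleR_scaleR)
    also have "(fact (Suc m + j) / fact (Suc m)) * real (Suc m) = (fact (m + Suc j) / fact m :: real)"
    proof -
      have f: "(fact (Suc m) :: real) = real (Suc m) * fact m" by (rule fact_Suc)
      have e: "Suc m + j = m + Suc j" by simp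
      have nz: "(fact m :: real) \<noteq> 0" by simp
      show ?thesis unfolding f e using nz by simp
    qed
    finally show ?case .
  qed
  define c where "c = 2 * norm x * norm s"
  have \<delta>norm: "norm (\<delta> y) \<le> 2 * norm x * norm y" for y
  proof -
    have "norm (\<delta> y) \<le> norm (x o\<^sub>L y) + norm (y o\<^sub>L x)" unfolding \<delta>_def by (rule norm_triangle_ineq4)
    also have "\<dots> \<le> norm x * norm y + norm y * norm x" by (intro add_mono norm_blinfun_compose)
    finally show ?thesis by simp
  qed
  have \<delta>pow: "norm ((\<delta> ^^ k) y) \<le> (2 * norm x) ^ k * norm y" for k y
  proof (induction k)
    case 0 then show ?case by simp
  next
    case (Suc k)
    have "norm ((\<delta> ^^ Suc k) y) \<le> 2 * norm x * norm ((\<delta> ^^ k) y)" using \<delta>norm by simp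
    also have "\<dots> \<le> 2 * norm x * ((2 * norm x) ^ k * norm y)" using Suc by (intro mult_left_mono) auto
    finally show ?case by (simp add: algebra_simps)
  qed
  have bound: "fact k * norm (pw E k) \<le> c ^ k" for k
  proof -
    have "(\<delta> ^^ k) (pw s (0 + k)) = fact k *\<^sub>R pw E k" using main[of k 0] by simp
    then have "fact k * norm (pw E k) = norm ((\<delta> ^^ k) (pw s k))" by simp
    also have "\<dots> \<le> (2 * norm x) ^ k * norm (pw s k)" by (rule \<delta>pow)
    also have "\<dots> \<le> (2 * norm x) ^ k * norm s ^ k" using pw_norm by (intro mult_left_mono) auto
    also have "\<dots> = c ^ k" by (simp add: c_def power_mult_distrib)
    finally show ?thesis .
  qed
  have "norm E = 0"
  proof (rule ccontr)
    assume "norm E \<noteq> 0"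
    then have r: "norm E > 0" by simp
    define q where "q = c / norm E"
    have lim: "(\<lambda>n. inverse (fact n) * q ^ n) \<longlonglongrightarrow> 0" by (rule summable_LIMSEQ_zero[OF summable_exp])
    then obtain N where N: "\<And>n. n \<ge> N \<Longrightarrow> norm (inverse (fact n) * q ^ n) < 1"
      using LIMSEQ_D[OF lim, of 1] by auto
    define K where "K = (2::nat) ^ N"
    have KN: "K \<ge> N" unfolding K_def using less_exp[of N] by linarith
    have "fact K * norm E ^ K \<le> fact K * norm (pw E K)"
      unfolding K_def using pw_pow2[OF EE] by (intro mult_left_mono) auto
    also have "\<dots> \<le> c ^ K" by (rule bound)
    finally have "fact K * norm E ^ K \<le> c ^ K" .
    then have "1 \<le> inverse (fact K) * q ^ K"
      using r by (simp add: q_def power_divide field_simps)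
    moreover have "norm (inverse (fact K) * q ^ K) < 1" using N[OF KN] .
    ultimately show False by simp
  qed
  then have "E = 0" by simp
  then show ?thesis by (simp add: E_def a_def b_def)
qed

context dyn_setting
begin

context
  fixes x :: "'h \<Rightarrow>\<^sub>L 'h"
  assumes xB: "x \<in> B" and xA: "\<And>a. a \<in> A \<Longrightarrow> x o\<^sub>L a = a o\<^sub>L x"
begin

definition F :: "real \<Rightarrow> ('h \<Rightarrow>\<^sub>L 'h)" where "F t = \<omega> t x"

lemma F_cont: "continuous_on UNIV F"
  unfolding F_def[abs_def] using om_cont[OF xB] .
lemma F_B: "F t \<in> B" unfolding F_def by (rule om_B[OF xB])
lemma F_per: "F (t + 2 * pi) = F t" unfolding F_def by (rule om_per[OF xB])
lemma F_shift: "\<omega> s (F t) = F (s + t)" unfolding F_def using om_plus[OF xB] by simp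
lemma F_0: "F 0 = x" unfolding F_def by (rule om_0[OF xB])

lemma F_A:
  assumes a: "a \<in> A"
  shows "F t o\<^sub>L a = a o\<^sub>L F t"
proof -
  define a' where "a' = \<omega> (- t) a"
  have a'A: "a' \<in> A" unfolding a'_def by (rule A_inv[OF a])
  have aB: "a \<in> B" using a A_B by auto
  have a'B: "a' \<in> B" using a'A A_B by auto
  have "\<omega> (t + - t) a = \<omega> t (\<omega> (- t) a)" by (rule om_plus[OF aB])
  then have "\<omega> t a' = \<omega> (t + - t) a" unfolding a'_def by simp
  also have "\<dots> = a" using om_0[OF aB] by simp
  finally have ta: "\<omega> t a' = a" .
  have "F t o\<^sub>L a = \<omega> t (x o\<^sub>L a')" unfolding F_def using om_comp[OF xB a'B] ta by simp
  also have "\<dots> = \<omega> t (a' o\<^sub>L x)" using xA[OF a'A] by simp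
  also have "\<dots> = a o\<^sub>L F t" unfolding F_def using om_comp[OF a'B xB] ta by simp
  finally show ?thesis .
qed

definition I :: "(real \<Rightarrow> real) \<Rightarrow> ('h \<Rightarrow>\<^sub>L 'h)" where
  "I g = integral {0..2*pi} (\<lambda>t. g t *\<^sub>R F t)"

lemma integrand_cont: "continuous_on UNIV g \<Longrightarrow> continuous_on UNIV (\<lambda>t. g t *\<^sub>R F t)"
  using F_cont by (intro continuous_on_scaleR) auto

lemma I_integrable: "continuous_on UNIV g \<Longrightarrow> (\<lambda>t. g t *\<^sub>R F t) integrable_on {a..b}"
  by (rule integrable_continuous_real) (rule continuous_on_subset[OF integrand_cont], auto)

lemma I_has: "continuous_on UNIV g \<Longrightarrow> ((\<lambda>t. g t *\<^sub>R F t) has_integral I g) {0..2*pi}"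
  unfolding I_def using I_integrable by (rule integrable_integral)

lemma I_B: "continuous_on UNIV g \<Longrightarrow> I g \<in> B"
  by (rule int_in_subspace[OF B_subspace B_closed I_has]) (auto intro: B_scaleR F_B)

lemma I_om: "continuous_on UNIV g \<Longrightarrow> \<omega> s (I g) = integral {0..2*pi} (\<lambda>t. g t *\<^sub>R F (s + t))"
proof -
  assume g: "continuous_on UNIV g"
  have "((\<lambda>t. \<omega> s (g t *\<^sub>R F t)) has_integral \<omega> s (I g)) {0..2*pi}"
  proof (rule int_linear_on[OF B_subspace I_has[OF g] _ I_B[OF g]])
    show "g t *\<^sub>R F t \<in> B" for t by (intro B_scaleR F_B)
    show "\<omega> s (a + b) = \<omega> s a + \<omega> s b" if "a \<in> B" "b \<in> B" for a b using om_add that by blast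
    show "\<omega> s (r *\<^sub>R a) = r *\<^sub>R \<omega> s a" if "a \<in> B" for r a using om_scaleR that by blast
    show "norm (\<omega> s a) \<le> 1 * norm a" if "a \<in> B" for a using om_norm that by simp
    show "(0::real) < 1" by simp
  qed
  moreover have "\<omega> s (g t *\<^sub>R F t) = g t *\<^sub>R F (s + t)" for t
    using om_scaleR[OF F_B] F_shift by simp
  ultimately have h: "((\<lambda>t. g t *\<^sub>R F (s + t)) has_integral \<omega> s (I g)) {0..2*pi}" by simp
  show ?thesis by (rule integral_unique[OF h, symmetric])
qed

lemma I_shift:
  assumes g: "continuous_on UNIV g" and gp: "\<And>t. g (t + 2 * pi) = g t"
  shows "\<omega> s (I g) = I (\<lambda>t. g (t - s))"
proof -
  define G where "G \<tau> = g (\<tau> - s) *\<^sub>R F \<tau>" for \<tau>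
  have Gc: "continuous_on UNIV G" unfolding G_def
    by (intro continuous_on_scaleR F_cont continuous_on_compose2[OF g] continuous_intros) auto
  have Gp: "G (t + 2 * pi) = G t" for t
  proof -
    have "g (t + 2 * pi - s) = g ((t - s) + 2 * pi)" by (simp add: algebra_simps)
    also have "\<dots> = g (t - s)" by (rule gp)
    finally show ?thesis unfolding G_def using F_per by simp
  qed
  have "\<omega> s (I g) = integral {0..2*pi} (\<lambda>t. g t *\<^sub>R F (s + t))" by (rule I_om[OF g])
  also have "\<dots> = integral {0..2*pi} (\<lambda>t. G (t + s))" unfolding G_def by (simp add: add.commute)
  also have "\<dots> = integral {0..2*pi} G" by (rule shift_period[OF Gc Gp])
  also have "\<dots> = I (\<lambda>t. g (t - s))" unfolding I_def G_def ..
  finally show ?thesis .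
qed

lemma I_lin:
  assumes "continuous_on UNIV g1" "continuous_on UNIV g2"
  shows "I (\<lambda>t. c1 * g1 t + c2 * g2 t) = c1 *\<^sub>R I g1 + c2 *\<^sub>R I g2"
proof -
  have "I (\<lambda>t. c1 * g1 t + c2 * g2 t) = integral {0..2*pi} (\<lambda>t. c1 *\<^sub>R (g1 t *\<^sub>R F t) + c2 *\<^sub>R (g2 t *\<^sub>R F t))"
    unfolding I_def by (simp add: scaleR_add_left)
  also have "\<dots> = integral {0..2*pi} (\<lambda>t. c1 *\<^sub>R (g1 t *\<^sub>R F t)) + integral {0..2*pi} (\<lambda>t. c2 *\<^sub>R (g2 t *\<^sub>R F t))"
    using assms by (intro integral_add integrable_cmul I_integrable)
  also have "\<dots> = c1 *\<^sub>R I g1 + c2 *\<^sub>R I g2" unfolding I_def by (simp only: integral_cmul)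
  finally show ?thesis .
qed

lemma I_comp_right:
  assumes g: "continuous_on UNIV g"
  shows "I g o\<^sub>L y = integral {0..2*pi} (\<lambda>t. g t *\<^sub>R (F t o\<^sub>L y))"
proof -
  have bl: "bounded_linear (\<lambda>T. T o\<^sub>L y)"
    by (rule bounded_bilinear.bounded_linear_left[OF bounded_bilinear_blinfun_compose])
  have "integral {0..2*pi} ((\<lambda>T. T o\<^sub>L y) \<circ> (\<lambda>t. g t *\<^sub>R F t)) = I g o\<^sub>L y"
    unfolding I_def by (rule integral_linear[OF I_integrable[OF g] bl])
  then show ?thesis by (simp add: o_def comp_scaleR_left)
qed

lemma I_comp_left:
  assumes g: "continuous_on UNIV g"
  shows "y o\<^sub>L I g = integral {0..2*pi} (\<lambda>t. g t *\<^sub>R (y o\<^sub>L F t))"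
proof -
  have bl: "bounded_linear (\<lambda>T. y o\<^sub>L T)"
    by (rule bounded_bilinear.bounded_linear_right[OF bounded_bilinear_blinfun_compose])
  have "integral {0..2*pi} ((\<lambda>T. y o\<^sub>L T) \<circ> (\<lambda>t. g t *\<^sub>R F t)) = y o\<^sub>L I g"
    unfolding I_def by (rule integral_linear[OF I_integrable[OF g] bl])
  then show ?thesis by (simp add: o_def comp_scaleR_right)
qed

lemma I_A:
  assumes g: "continuous_on UNIV g" and a: "a \<in> A"
  shows "I g o\<^sub>L a = a o\<^sub>L I g"
proof -
  have "I g o\<^sub>L a = integral {0..2*pi} (\<lambda>t. g t *\<^sub>R (F t o\<^sub>L a))" by (rule I_comp_right[OF g])
  also have "\<dots> = integral {0..2*pi} (\<lambda>t. g t *\<^sub>R (a o\<^sub>L F t))" using F_A[OF a] by simp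
  also have "\<dots> = a o\<^sub>L I g" by (rule I_comp_left[OF g, symmetric])
  finally show ?thesis .
qed


lemma cos_cont: "continuous_on UNIV (\<lambda>t. cos (real_of_int n * t))" by (intro continuous_intros)
lemma sin_cont: "continuous_on UNIV (\<lambda>t. sin (real_of_int n * t))" by (intro continuous_intros)
lemma cos_per: "cos (real_of_int n * (t + 2 * pi)) = cos (real_of_int n * t)"
proof -
  have "real_of_int n * (t + 2 * pi) = real_of_int n * t + (2 * pi) * real_of_int n" by (simp add: algebra_simps)
  then show ?thesis by (simp add: cos_add)
qed
lemma sin_per: "sin (real_of_int n * (t + 2 * pi)) = sin (real_of_int n * t)"
proof -
  have "real_of_int n * (t + 2 * pi) = real_of_int n * t + (2 * pi) * real_of_int n" by (simp add: algebra_simps)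
  then show ?thesis by (simp add: sin_add)
qed

definition Ic :: "int \<Rightarrow> ('h \<Rightarrow>\<^sub>L 'h)" where "Ic n = I (\<lambda>t. cos (real_of_int n * t))"
definition Is :: "int \<Rightarrow> ('h \<Rightarrow>\<^sub>L 'h)" where "Is n = I (\<lambda>t. sin (real_of_int n * t))"
definition X :: "int \<Rightarrow> ('h \<Rightarrow>\<^sub>L 'h)" where "X n = Ic n + cscale J (- \<i>) (Is n)"

lemma Ic_B: "Ic n \<in> B" unfolding Ic_def by (rule I_B[OF cos_cont])
lemma Is_B: "Is n \<in> B" unfolding Is_def by (rule I_B[OF sin_cont])
lemma X_B: "X n \<in> B" unfolding X_def by (intro B_add B_cscale Ic_B Is_B)

lemma Ic_shift: "\<omega> s (Ic n) = cos (real_of_int n * s) *\<^sub>R Ic n + sin (real_of_int n * s) *\<^sub>R Is n"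
proof -
  have "\<omega> s (Ic n) = I (\<lambda>t. cos (real_of_int n * (t - s)))"
    unfolding Ic_def by (rule I_shift[OF cos_cont cos_per])
  also have "(\<lambda>t. cos (real_of_int n * (t - s))) =
      (\<lambda>t. cos (real_of_int n * s) * cos (real_of_int n * t) + sin (real_of_int n * s) * sin (real_of_int n * t))"
    by (rule ext) (simp add: right_diff_distrib cos_diff mult.commute)
  also have "I \<dots> = cos (real_of_int n * s) *\<^sub>R Ic n + sin (real_of_int n * s) *\<^sub>R Is n"
    unfolding Ic_def Is_def by (rule I_lin[OF cos_cont sin_cont])
  finally show ?thesis .
qed

lemma Is_shift: "\<omega> s (Is n) = cos (real_of_int n * s) *\<^sub>R Is n + (- sin (real_of_int n * s)) *\<^sub>R Ic n"
proof -
  have "\<omega> s (Is n) = I (\<lambda>t. sin (real_of_int n * (t - s)))"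
    unfolding Is_def by (rule I_shift[OF sin_cont sin_per])
  also have "(\<lambda>t. sin (real_of_int n * (t - s))) =
      (\<lambda>t. cos (real_of_int n * s) * sin (real_of_int n * t) + (- sin (real_of_int n * s)) * cos (real_of_int n * t))"
    by (rule ext) (simp add: right_diff_distrib sin_diff mult.commute)
  also have "I \<dots> = cos (real_of_int n * s) *\<^sub>R Is n + (- sin (real_of_int n * s)) *\<^sub>R Ic n"
    unfolding Ic_def Is_def by (rule I_lin[OF sin_cont cos_cont])
  finally show ?thesis .
qed

lemma X_eig: "\<omega> s (X n) = cscale J (cis (real_of_int n * s)) (X n)"
proof -
  have "\<omega> s (X n) = \<omega> s (Ic n) + cscale J (- \<i>) (\<omega> s (Is n))"
    unfolding X_def using om_add[OF Ic_B B_cscale[OF Is_B]] om_cscale[OF Is_B] by simp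
  also have "\<dots> = cscale J (cis (real_of_int n * s)) (X n)"
    unfolding Ic_shift Is_shift X_def
    by (rule blinfun_eqI)
      (simp add: cscale_apply[OF cJ] blinfun.add_left blinfun.diff_left blinfun.scaleR_left J_add[OF cJ] J_scale[OF cJ] J_diff[OF cJ]
        J_minus[OF cJ] cstruct_JJ[OF cJ] algebra_simps)
  finally show ?thesis .
qed

lemma A_BH: "a \<in> A \<Longrightarrow> a \<in> BH J" using A_B B_BH by auto

lemma X_A: "a \<in> A \<Longrightarrow> X n o\<^sub>L a = a o\<^sub>L X n"
proof -
  assume a: "a \<in> A"
  have c1: "Ic n o\<^sub>L a = a o\<^sub>L Ic n" unfolding Ic_def by (rule I_A[OF cos_cont a])
  have c2: "Is n o\<^sub>L a = a o\<^sub>L Is n" unfolding Is_def by (rule I_A[OF sin_cont a])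
  show ?thesis unfolding X_def
    by (simp add: comp_add_left comp_add_right cscale_comp_left[OF cJ] cscale_comp_right[OF cJ A_BH[OF a]] c1 c2)
qed


lemma cscale_cnj_cis: "cscale J (cnj (cis a)) (cscale J (cis a) T) = T"
proof -
  have "cnj (cis a) * cis a = 1" by (simp add: cis_cnj cis_mult)
  then show ?thesis by (simp add: cscale_mult[OF cJ] cscale_one)
qed

lemma fixed_in_A:
  assumes PB: "P \<in> B" and PA: "\<And>a. a \<in> A \<Longrightarrow> P o\<^sub>L a = a o\<^sub>L P" and sa: "is_adj P P"
    and fx: "\<And>t. \<omega> t P = P"
  shows "P \<in> A"
proof (rule eigen_in_A[OF PB PB PA PA sa refl])
  show "\<exists>c. \<omega> t P = cscale J c P" for t using fx cscale_one by metis
  then show "\<exists>c. \<omega> t P = cscale J c P" for t .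
qed

lemma X_in_A: "X n \<in> A"
proof -
  obtain Y where YB: "Y \<in> B" and adj: "is_adj (X n) Y" using B_adj[OF X_B] by blast
  have XH: "X n \<in> BH J" using X_B B_BH by auto
  have YH: "Y \<in> BH J" using YB B_BH by auto
  have YA: "Y o\<^sub>L a = a o\<^sub>L Y" if a: "a \<in> A" for a
  proof -
    obtain a' where a': "a' \<in> A" "is_adj a a'" using A_adj[OF a] by blast
    have "is_adj (X n o\<^sub>L a') (a o\<^sub>L Y)" using adj_comp[OF adj adj_sym[OF a'(2)]] .
    moreover have "is_adj (a' o\<^sub>L X n) (Y o\<^sub>L a)" using adj_comp[OF adj_sym[OF a'(2)] adj] .
    moreover have "X n o\<^sub>L a' = a' o\<^sub>L X n" by (rule X_A[OF a'(1)])
    ultimately show ?thesis using adj_unique by metis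
  qed
  have Yeig: "\<omega> t Y = cscale J (cnj (cis (real_of_int n * t))) Y" for t
  proof -
    have "is_adj (\<omega> t (X n)) (\<omega> t Y)" by (rule om_adj[OF X_B YB adj])
    then have "is_adj (cscale J (cis (real_of_int n * t)) (X n)) (\<omega> t Y)" by (simp add: X_eig)
    moreover have "is_adj (cscale J (cis (real_of_int n * t)) (X n)) (cscale J (cnj (cis (real_of_int n * t))) Y)"
      by (rule adj_cscale[OF cJ XH adj])
    ultimately show ?thesis using adj_unique by metis
  qed
  have fixP: "\<omega> t (Y o\<^sub>L X n) = Y o\<^sub>L X n" for t
  proof -
    have "\<omega> t (Y o\<^sub>L X n) = \<omega> t Y o\<^sub>L \<omega> t (X n)" by (rule om_comp[OF YB X_B])
    also have "\<dots> = cscale J (cnj (cis (real_of_int n * t))) Y o\<^sub>L cscale J (cis (real_of_int n * t)) (X n)"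
      by (simp add: X_eig Yeig)
    also have "\<dots> = cscale J (cnj (cis (real_of_int n * t))) (cscale J (cis (real_of_int n * t)) (Y o\<^sub>L X n))"
      by (simp add: cscale_comp_left[OF cJ] cscale_comp_right[OF cJ YH])
    also have "\<dots> = Y o\<^sub>L X n" by (rule cscale_cnj_cis)
    finally show ?thesis .
  qed
  have fixQ: "\<omega> t (X n o\<^sub>L Y) = X n o\<^sub>L Y" for t
  proof -
    have "\<omega> t (X n o\<^sub>L Y) = \<omega> t (X n) o\<^sub>L \<omega> t Y" by (rule om_comp[OF X_B YB])
    also have "\<dots> = cscale J (cis (real_of_int n * t)) (X n) o\<^sub>L cscale J (cnj (cis (real_of_int n * t))) Y"
      by (simp add: X_eig Yeig)
    also have "\<dots> = cscale J (cnj (cis (real_of_int n * t))) (cscale J (cis (real_of_int n * t)) (X n o\<^sub>L Y))"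
      by (simp add: cscale_comp_left[OF cJ] cscale_comp_right[OF cJ XH] cscale_mult[OF cJ] mult.commute)
    also have "\<dots> = X n o\<^sub>L Y" by (rule cscale_cnj_cis)
    finally show ?thesis .
  qed
  have PA: "Y o\<^sub>L X n \<in> A"
  proof (rule fixed_in_A[OF B_comp[OF YB X_B] _ _ fixP])
    show "(Y o\<^sub>L X n) o\<^sub>L a = a o\<^sub>L (Y o\<^sub>L X n)" if a: "a \<in> A" for a
      using X_A[OF a] YA[OF a] by (simp add: comp_assoc) (simp add: comp_assoc[symmetric])
    show "is_adj (Y o\<^sub>L X n) (Y o\<^sub>L X n)" using adj_comp[OF adj_sym[OF adj] adj] .
  qed
  have QA: "X n o\<^sub>L Y \<in> A"
  proof (rule fixed_in_A[OF B_comp[OF X_B YB] _ _ fixQ])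
    show "(X n o\<^sub>L Y) o\<^sub>L a = a o\<^sub>L (X n o\<^sub>L Y)" if a: "a \<in> A" for a
      using X_A[OF a] YA[OF a] by (simp add: comp_assoc) (simp add: comp_assoc[symmetric])
    show "is_adj (X n o\<^sub>L Y) (X n o\<^sub>L Y)" using adj_comp[OF adj adj_sym[OF adj]] .
  qed
  have nor: "X n o\<^sub>L Y = Y o\<^sub>L X n"
    by (rule ks_normal[OF adj X_A[OF PA] X_A[OF QA]])
  show ?thesis
  proof (rule eigen_in_A[OF X_B YB X_A YA adj nor])
    show "\<exists>c. \<omega> t (X n) = cscale J c (X n)" for t using X_eig by blast
    show "\<exists>c. \<omega> t Y = cscale J c Y" for t using Yeig by blast
  qed
qed


lemma Ic_neg: "Ic (- n) = Ic n" unfolding Ic_def by simp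
lemma Is_neg: "Is (- n) = - Is n"
proof -
  have "Is (- n) = integral {0..2*pi} (\<lambda>t. - (sin (real_of_int n * t) *\<^sub>R F t))"
    unfolding Is_def I_def by simp
  also have "\<dots> = - Is n" unfolding Is_def I_def by (rule integral_neg)
  finally show ?thesis .
qed

lemma X_sum: "X n + X (- n) = 2 *\<^sub>R Ic n"
  unfolding X_def Ic_neg Is_neg
  by (rule blinfun_eqI) (simp add: cscale_apply[OF cJ] blinfun.add_left blinfun.minus_left J_minus[OF cJ] scaleR_2)

lemma X_dif: "X n - X (- n) = 2 *\<^sub>R cscale J (- \<i>) (Is n)"
  unfolding X_def Ic_neg Is_neg
  by (rule blinfun_eqI) (simp add: cscale_apply[OF cJ] blinfun.add_left blinfun.diff_left blinfun.minus_left
      blinfun.scaleR_left J_minus[OF cJ] scaleR_2)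

context
  fixes y :: "'h \<Rightarrow>\<^sub>L 'h"
  assumes y: "y \<in> commutant J A"
begin

lemma yH: "y \<in> BH J" using y unfolding commutant_def by auto
lemma yA: "a \<in> A \<Longrightarrow> y o\<^sub>L a = a o\<^sub>L y" using y unfolding commutant_def by auto

lemma Xy: "X n o\<^sub>L y = y o\<^sub>L X n" using yA[OF X_in_A] by simp

lemma C_add: "a o\<^sub>L y = y o\<^sub>L a \<Longrightarrow> b o\<^sub>L y = y o\<^sub>L b \<Longrightarrow> (a + b) o\<^sub>L y = y o\<^sub>L (a + b)"
  by (simp add: comp_add_left comp_add_right)
lemma C_diff: "a o\<^sub>L y = y o\<^sub>L a \<Longrightarrow> b o\<^sub>L y = y o\<^sub>L b \<Longrightarrow> (a - b) o\<^sub>L y = y o\<^sub>L (a - b)"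
  by (simp add: comp_diff_left comp_diff_right)
lemma C_scaleR: "a o\<^sub>L y = y o\<^sub>L a \<Longrightarrow> (r *\<^sub>R a) o\<^sub>L y = y o\<^sub>L (r *\<^sub>R a)"
  by (simp add: comp_scaleR_left comp_scaleR_right)
lemma C_cscale: "a o\<^sub>L y = y o\<^sub>L a \<Longrightarrow> cscale J c a o\<^sub>L y = y o\<^sub>L cscale J c a"
  by (simp add: cscale_comp_left[OF cJ] cscale_comp_right[OF cJ yH])

lemma Ic_y: "Ic n o\<^sub>L y = y o\<^sub>L Ic n"
proof -
  have "(X n + X (- n)) o\<^sub>L y = y o\<^sub>L (X n + X (- n))" by (intro C_add Xy)
  then have "(2 *\<^sub>R Ic n) o\<^sub>L y = y o\<^sub>L (2 *\<^sub>R Ic n)" by (simp only: X_sum)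
  then have "((1/2::real) *\<^sub>R (2 *\<^sub>R Ic n)) o\<^sub>L y = y o\<^sub>L ((1/2::real) *\<^sub>R (2 *\<^sub>R Ic n))" by (rule C_scaleR)
  then show ?thesis by simp
qed

lemma Is_y: "Is n o\<^sub>L y = y o\<^sub>L Is n"
proof -
  have "(X n - X (- n)) o\<^sub>L y = y o\<^sub>L (X n - X (- n))" by (intro C_diff Xy)
  then have "(2 *\<^sub>R cscale J (- \<i>) (Is n)) o\<^sub>L y = y o\<^sub>L (2 *\<^sub>R cscale J (- \<i>) (Is n))" by (simp only: X_dif)
  then have "((1/2::real) *\<^sub>R (2 *\<^sub>R cscale J (- \<i>) (Is n))) o\<^sub>L y = y o\<^sub>L ((1/2::real) *\<^sub>R (2 *\<^sub>R cscale J (- \<i>) (Is n)))"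
    by (rule C_scaleR)
  then have "cscale J (- \<i>) (Is n) o\<^sub>L y = y o\<^sub>L cscale J (- \<i>) (Is n)" by simp
  then have "cscale J \<i> (cscale J (- \<i>) (Is n)) o\<^sub>L y = y o\<^sub>L cscale J \<i> (cscale J (- \<i>) (Is n))" by (rule C_cscale)
  moreover have "cscale J \<i> (cscale J (- \<i>) (Is n)) = Is n" by (simp add: cscale_mult[OF cJ] cscale_one)
  ultimately show ?thesis by simp
qed

definition phi :: "'h \<Rightarrow> 'h \<Rightarrow> real \<Rightarrow> real" where
  "phi u v t = inner (F t (y u)) v - inner (y (F t u)) v"

lemma phi_cont: "continuous_on UNIV (phi u v)"
proof -
  have b1: "bounded_linear (\<lambda>T::'h \<Rightarrow>\<^sub>L 'h. inner (T (y u)) v)" by (rule bl_inner_left)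
  have b2: "bounded_linear (\<lambda>T::'h \<Rightarrow>\<^sub>L 'h. inner (y (T u)) v)"
    by (rule bounded_linear_compose[OF bounded_linear_compose[OF bounded_linear_inner_left blinfun.bounded_linear_right] bl_apply_left])
  have "continuous_on UNIV (\<lambda>t. inner (F t (y u)) v)"
    by (rule continuous_on_compose2[OF linear_continuous_on[OF b1] F_cont]) auto
  moreover have "continuous_on UNIV (\<lambda>t. inner (y (F t u)) v)"
    by (rule continuous_on_compose2[OF linear_continuous_on[OF b2] F_cont]) auto
  ultimately show ?thesis unfolding phi_def[abs_def] by (intro continuous_on_diff)
qed

lemma phi_per: "phi u v (t + 2 * pi) = phi u v t" unfolding phi_def using F_per by simp

lemma phi_0: "phi u v 0 = inner ((x o\<^sub>L y) u) v - inner ((y o\<^sub>L x) u) v" unfolding phi_def F_0 by simp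

lemma int_vanish:
  assumes g: "continuous_on UNIV g" and c: "I g o\<^sub>L y = y o\<^sub>L I g"
  shows "integral {0..2*pi} (\<lambda>t. g t * phi u v t) = 0"
proof -
  define L where "L T = inner (T (y u)) v - inner (y (T u)) v" for T :: "'h \<Rightarrow>\<^sub>L 'h"
  have b1: "bounded_linear (\<lambda>T::'h \<Rightarrow>\<^sub>L 'h. inner (T (y u)) v)" by (rule bl_inner_left)
  have b2: "bounded_linear (\<lambda>T::'h \<Rightarrow>\<^sub>L 'h. inner (y (T u)) v)"
    by (rule bounded_linear_compose[OF bounded_linear_compose[OF bounded_linear_inner_left blinfun.bounded_linear_right] bl_apply_left])
  have bl: "bounded_linear L" unfolding L_def[abs_def] by (rule bounded_linear_sub[OF b1 b2])
  have "integral {0..2*pi} (L \<circ> (\<lambda>t. g t *\<^sub>R F t)) = L (I g)"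
    unfolding I_def by (rule integral_linear[OF I_integrable[OF g] bl])
  also have "L (I g) = 0"
  proof -
    have "(I g o\<^sub>L y) u = (y o\<^sub>L I g) u" using c by simp
    then show ?thesis unfolding L_def by simp
  qed
  also have "L \<circ> (\<lambda>t. g t *\<^sub>R F t) = (\<lambda>t. g t * phi u v t)"
    by (rule ext) (simp add: L_def phi_def blinfun.scaleR_left blinfun.scaleR_right right_diff_distrib)
  finally show ?thesis .
qed

lemma int_cos: "integral {0..2*pi} (\<lambda>t. cos (real_of_int n * t) * phi u v t) = 0"
  by (rule int_vanish[OF cos_cont]) (use Ic_y in \<open>simp add: Ic_def\<close>)
lemma int_sin: "integral {0..2*pi} (\<lambda>t. sin (real_of_int n * t) * phi u v t) = 0"
  by (rule int_vanish[OF sin_cont]) (use Is_y in \<open>simp add: Is_def\<close>)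

end

end
end

inductive_set trigV :: "(real \<Rightarrow> real) set" where
  vcos: "(\<lambda>t. cos (real_of_int n * t)) \<in> trigV"
| vsin: "(\<lambda>t. sin (real_of_int n * t)) \<in> trigV"
| vadd: "f \<in> trigV \<Longrightarrow> g \<in> trigV \<Longrightarrow> (\<lambda>t. f t + g t) \<in> trigV"
| vscl: "f \<in> trigV \<Longrightarrow> (\<lambda>t. c * f t) \<in> trigV"

lemma v_half_sum:
  assumes "f \<in> trigV" "g \<in> trigV"
  shows "(\<lambda>t. (f t + g t) / 2) \<in> trigV"
proof -
  have "(\<lambda>t. (1/2) * (f t + g t)) \<in> trigV" using assms by (intro vscl vadd)
  then show ?thesis by simp
qed

lemma v_half_diff:
  assumes "f \<in> trigV" "g \<in> trigV"
  shows "(\<lambda>t. (f t - g t) / 2) \<in> trigV"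
proof -
  have "(\<lambda>t. (1/2) * (f t + (-1) * g t)) \<in> trigV" using assms by (intro vscl vadd)
  then show ?thesis by simp
qed

lemma base_mult:
  assumes b: "b = (\<lambda>t. cos (real_of_int n * t)) \<or> b = (\<lambda>t. sin (real_of_int n * t))"
    and c: "c = (\<lambda>t. cos (real_of_int m * t)) \<or> c = (\<lambda>t. sin (real_of_int m * t))"
  shows "(\<lambda>t. b t * c t) \<in> trigV"
proof -
  have e1: "real_of_int n * t - real_of_int m * t = real_of_int (n - m) * t" for t by (simp add: algebra_simps)
  have e2: "real_of_int n * t + real_of_int m * t = real_of_int (n + m) * t" for t by (simp add: algebra_simps)
  have cc: "(\<lambda>t. cos (real_of_int n * t) * cos (real_of_int m * t)) \<in> trigV"
    unfolding cos_times_cos e1 e2 by (intro v_half_sum vcos)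
  have ss: "(\<lambda>t. sin (real_of_int n * t) * sin (real_of_int m * t)) \<in> trigV"
    unfolding sin_times_sin e1 e2 by (intro v_half_diff vcos)
  have sc: "(\<lambda>t. sin (real_of_int n * t) * cos (real_of_int m * t)) \<in> trigV"
    unfolding sin_times_cos e1 e2 by (intro v_half_sum vsin)
  have cs: "(\<lambda>t. cos (real_of_int n * t) * sin (real_of_int m * t)) \<in> trigV"
    unfolding cos_times_sin e1 e2 by (intro v_half_diff vsin)
  show ?thesis using b c by (elim disjE; hypsubst; simp only: cc ss sc cs)
qed

lemma v_mult_base:
  assumes g: "g \<in> trigV" and b: "b = (\<lambda>t. cos (real_of_int n * t)) \<or> b = (\<lambda>t. sin (real_of_int n * t))"
  shows "(\<lambda>t. b t * g t) \<in> trigV"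
  using g
proof (induction rule: trigV.induct)
  case (vcos m) show ?case by (rule base_mult[OF b, where m=m]) simp
next
  case (vsin m) show ?case by (rule base_mult[OF b, where m=m]) simp
next
  case (vadd f g)
  have "(\<lambda>t. b t * f t + b t * g t) \<in> trigV" using vadd.IH by (rule trigV.vadd)
  then show ?case by (simp add: distrib_left)
next
  case (vscl f c)
  have "(\<lambda>t. c * (b t * f t)) \<in> trigV" using vscl.IH by (rule trigV.vscl)
  then show ?case by (simp add: ac_simps)
qed

lemma v_mult:
  assumes f: "f \<in> trigV" and g: "g \<in> trigV"
  shows "(\<lambda>t. f t * g t) \<in> trigV"
  using f
proof (induction rule: trigV.induct)
  case (vcos n)
  have "(\<lambda>t. cos (real_of_int n * t) * g t) \<in> trigV" by (rule v_mult_base[OF g, where n=n]) simp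
  then show ?case .
next
  case (vsin n)
  have "(\<lambda>t. sin (real_of_int n * t) * g t) \<in> trigV" by (rule v_mult_base[OF g, where n=n]) simp
  then show ?case .
next
  case (vadd f1 f2)
  have "(\<lambda>t. f1 t * g t + f2 t * g t) \<in> trigV" using vadd.IH by (rule trigV.vadd)
  then show ?case by (simp add: distrib_right)
next
  case (vscl f c)
  have "(\<lambda>t. c * (f t * g t)) \<in> trigV" using vscl.IH by (rule trigV.vscl)
  then show ?case by (simp add: ac_simps)
qed

lemma v_const: "(\<lambda>t. c) \<in> trigV"
proof -
  have "(\<lambda>t. c * cos (real_of_int 0 * t)) \<in> trigV" by (intro vscl vcos)
  then show ?thesis by simp
qed

lemma poly_trig: "real_polynomial_function P \<Longrightarrow> (\<lambda>t. P (cis t)) \<in> trigV"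
proof (induction P rule: real_polynomial_function.induct)
  case (linear f)
  have lin: "linear f" using linear by (rule bounded_linear.linear)
  have fz: "f (cis t) = f 1 * cos (real_of_int 1 * t) + f \<i> * sin (real_of_int 1 * t)" for t
  proof -
    have "cis t = cos t *\<^sub>R 1 + sin t *\<^sub>R \<i>" by (simp add: complex_eq_iff)
    then have "f (cis t) = f (cos t *\<^sub>R 1 + sin t *\<^sub>R \<i>)" by (rule arg_cong)
    also have "\<dots> = cos t *\<^sub>R f 1 + sin t *\<^sub>R f \<i>" by (simp only: linear_add[OF lin] linear_scale[OF lin])
    finally show ?thesis by (simp add: mult.commute)
  qed
  have "(\<lambda>t. f (cis t)) = (\<lambda>t. f 1 * cos (real_of_int 1 * t) + f \<i> * sin (real_of_int 1 * t))"
    by (rule ext) (rule fz)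
  also have "\<dots> \<in> trigV" by (intro vadd vscl vcos vsin)
  finally show ?case .
next
  case (const c) then show ?case by (rule v_const)
next
  case (add f g) show ?case by (rule vadd[OF add.IH])
next
  case (mult f g) show ?case by (rule v_mult[OF mult.IH])
qed

lemma cis_eq_imp: "cis a = cis b \<Longrightarrow> \<exists>n::int. a = b + 2 * pi * real_of_int n"
proof -
  assume "cis a = cis b"
  then have "Re (cis a) = Re (cis b)" "Im (cis a) = Im (cis b)" by simp_all
  then have "sin a = sin b \<and> cos a = cos b" by simp
  then show ?thesis using sin_cos_eq_iff by blast
qed

context
  fixes \<phi> :: "real \<Rightarrow> real"
  assumes cont: "continuous_on UNIV \<phi>" and per: "\<And>t. \<phi> (t + 2 * pi) = \<phi> t"
begin

lemma phi_cis_eq: "cis a = cis b \<Longrightarrow> \<phi> a = \<phi> b"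
proof -
  assume "cis a = cis b"
  then obtain n where "a = b + 2 * pi * real_of_int n" using cis_eq_imp by blast
  then show ?thesis using periodic_int[of \<phi>, OF per] by simp
qed

definition Phi :: "complex \<Rightarrow> real" where "Phi z = \<phi> (Arg z)"

lemma Phi_cis: "Phi (cis t) = \<phi> t"
proof -
  have "cis (Arg (cis t)) = cis t" using cis_Arg[of "cis t"] by (simp add: sgn_div_norm)
  then show ?thesis unfolding Phi_def by (rule phi_cis_eq)
qed

lemma Phi_alt: "z \<noteq> 0 \<Longrightarrow> Phi z = \<phi> (Arg (- z) + pi)"
proof -
  assume z: "z \<noteq> 0"
  have "cis (Arg (- z) + pi) = - cis (Arg (- z))" by (simp add: cis_mult[symmetric] cis_pi)
  also have "\<dots> = sgn z" using z cis_Arg[of "- z"] by (simp add: sgn_minus)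
  also have "\<dots> = cis (Arg z)" using cis_Arg[OF z] by simp
  finally show ?thesis unfolding Phi_def by (intro phi_cis_eq[symmetric])
qed

lemma Phi_cont: "continuous_on (sphere 0 1) Phi"
  unfolding continuous_on_eq_continuous_within
proof
  fix z :: complex assume z: "z \<in> sphere 0 1"
  have phic: "isCont \<phi> r" for r using cont by (simp add: continuous_on_eq_continuous_at)
  show "continuous (at z within sphere 0 1) Phi"
  proof (cases "z \<in> \<real>\<^sub>\<le>\<^sub>0")
    case False
    have "continuous (at z) (\<lambda>w. \<phi> (Arg w))"
      by (rule continuous_at_compose[OF continuous_at_Arg[OF False] phic, unfolded o_def])
    then show ?thesis unfolding Phi_def[abs_def] by (rule continuous_at_imp_continuous_at_within)
  next
    case True
    have nz: "- z \<notin> \<real>\<^sub>\<le>\<^sub>0" using True z by (auto simp: nonpos_Reals_def)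
    have m: "isCont (\<lambda>w::complex. - w) z" by (intro continuous_intros)
    have c0: "isCont (\<lambda>w. Arg (- w)) z"
      using continuous_at_compose[OF m continuous_at_Arg[OF nz]] by (simp add: o_def)
    have c1: "continuous (at z) (\<lambda>w. Arg (- w) + pi)"
      using continuous_add[OF c0 continuous_const] by simp
    have "continuous (at z) (\<lambda>w. \<phi> (Arg (- w) + pi))"
      by (rule continuous_at_compose[OF c1 phic, unfolded o_def])
    then have "continuous (at z within sphere 0 1) (\<lambda>w. \<phi> (Arg (- w) + pi))"
      by (rule continuous_at_imp_continuous_at_within)
    then show ?thesis
    proof (rule continuous_transform_within[of _ _ _ 1])
      show "(0::real) < 1" "z \<in> sphere 0 1" using z by auto
      fix w assume "w \<in> sphere (0::complex) 1"
      then have "w \<noteq> 0" by auto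
      then show "\<phi> (Arg (- w) + pi) = Phi w" by (simp add: Phi_alt)
    qed
  qed
qed



context
  assumes van_c: "\<And>n. integral {0..2*pi} (\<lambda>t. cos (real_of_int n * t) * \<phi> t) = 0"
    and van_s: "\<And>n. integral {0..2*pi} (\<lambda>t. sin (real_of_int n * t) * \<phi> t) = 0"
begin

lemma V_int: "f \<in> trigV \<Longrightarrow> continuous_on UNIV f \<and> integral {0..2*pi} (\<lambda>t. f t * \<phi> t) = 0"
proof (induction rule: trigV.induct)
  case (vcos n) show ?case using van_c by (auto intro!: continuous_intros)
next
  case (vsin n) show ?case using van_s by (auto intro!: continuous_intros)
next
  case (vadd f g)
  have cf: "continuous_on UNIV f" and cg: "continuous_on UNIV g" using vadd.IH by auto
  have i1: "(\<lambda>t. f t * \<phi> t) integrable_on {0..2*pi}"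
    by (rule integrable_continuous_real) (intro continuous_on_mult continuous_on_subset[OF cf] continuous_on_subset[OF cont], auto)
  have i2: "(\<lambda>t. g t * \<phi> t) integrable_on {0..2*pi}"
    by (rule integrable_continuous_real) (intro continuous_on_mult continuous_on_subset[OF cg] continuous_on_subset[OF cont], auto)
  have "integral {0..2*pi} (\<lambda>t. (f t + g t) * \<phi> t) = integral {0..2*pi} (\<lambda>t. f t * \<phi> t + g t * \<phi> t)"
    by (simp add: distrib_right)
  also have "\<dots> = integral {0..2*pi} (\<lambda>t. f t * \<phi> t) + integral {0..2*pi} (\<lambda>t. g t * \<phi> t)"
    by (rule integral_add[OF i1 i2])
  also have "\<dots> = 0" using vadd.IH by simp
  finally show ?case using cf cg by (auto intro: continuous_on_add)
next
  case (vscl f c)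
  have cf: "continuous_on UNIV f" using vscl.IH by auto
  have "integral {0..2*pi} (\<lambda>t. (c * f t) * \<phi> t) = integral {0..2*pi} (\<lambda>t. c *\<^sub>R (f t * \<phi> t))"
    by (simp add: mult.assoc)
  also have "\<dots> = c *\<^sub>R integral {0..2*pi} (\<lambda>t. f t * \<phi> t)" by (rule integral_cmul)
  also have "\<dots> = 0" using vscl.IH by simp
  finally show ?case using cf by (auto intro: continuous_on_mult continuous_on_const)
qed

lemma fourier_unique:
  assumes t: "t \<in> {0..2*pi}"
  shows "\<phi> t = 0"
proof -
  define Q where "Q = integral {0..2*pi} (\<lambda>t. \<phi> t * \<phi> t)"
  define K where "K = integral {0..2*pi} (\<lambda>t. \<bar>\<phi> t\<bar>)"
  have cphi: "continuous_on {0..2*pi} \<phi>" using cont continuous_on_subset by blast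
  have iK: "(\<lambda>t. \<bar>\<phi> t\<bar>) integrable_on {0..2*pi}"
    by (rule integrable_continuous_real) (intro continuous_intros cphi)
  have iQ: "(\<lambda>t. \<phi> t * \<phi> t) integrable_on {0..2*pi}"
    by (rule integrable_continuous_real) (intro continuous_on_mult cphi)
  have K0: "0 \<le> K" unfolding K_def by (rule integral_nonneg[OF iK]) simp
  have Q0: "0 \<le> Q" unfolding Q_def by (rule integral_nonneg[OF iQ]) simp
  have Qe: "Q \<le> e * K" if e: "0 < e" for e
  proof -
    obtain P where P: "polynomial_function P" and Pa: "\<And>z. z \<in> sphere (0::complex) 1 \<Longrightarrow> norm (Phi z - P z) < e"
      using Stone_Weierstrass_polynomial_function[OF compact_sphere Phi_cont e] by blast
    have rP: "real_polynomial_function P" using P by (simp add: real_polynomial_function_eq)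
    define p where "p t = P (cis t)" for t
    have pV: "p \<in> trigV" unfolding p_def[abs_def] by (rule poly_trig[OF rP])
    have cp: "continuous_on UNIV p" and ip: "integral {0..2*pi} (\<lambda>t. p t * \<phi> t) = 0"
      using V_int[OF pV] by auto
    have ipp: "(\<lambda>t. p t * \<phi> t) integrable_on {0..2*pi}"
      by (rule integrable_continuous_real) (intro continuous_on_mult continuous_on_subset[OF cp] cphi, auto)
    have close: "\<bar>\<phi> s - p s\<bar> < e" for s
    proof -
      have "cis s \<in> sphere (0::complex) 1" by simp
      then have "norm (Phi (cis s) - P (cis s)) < e" by (rule Pa)
      then show ?thesis by (simp add: Phi_cis p_def)
    qed
    have "Q = integral {0..2*pi} (\<lambda>t. \<phi> t * \<phi> t) - integral {0..2*pi} (\<lambda>t. p t * \<phi> t)"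
      using ip by (simp add: Q_def)
    also have "\<dots> = integral {0..2*pi} (\<lambda>t. \<phi> t * \<phi> t - p t * \<phi> t)"
      by (rule integral_diff[OF iQ ipp, symmetric])
    also have "\<dots> \<le> integral {0..2*pi} (\<lambda>t. e *\<^sub>R \<bar>\<phi> t\<bar>)"
    proof (rule integral_le)
      show "(\<lambda>t. \<phi> t * \<phi> t - p t * \<phi> t) integrable_on {0..2*pi}" by (rule integrable_diff[OF iQ ipp])
      show "(\<lambda>t. e *\<^sub>R \<bar>\<phi> t\<bar>) integrable_on {0..2*pi}" by (rule integrable_cmul[OF iK])
      fix s
      have "\<phi> s * \<phi> s - p s * \<phi> s = (\<phi> s - p s) * \<phi> s" by (simp add: algebra_simps)
      also have "\<dots> \<le> \<bar>\<phi> s - p s\<bar> * \<bar>\<phi> s\<bar>" by (metis abs_ge_self abs_mult)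
      also have "\<dots> \<le> e * \<bar>\<phi> s\<bar>" using close[of s] by (intro mult_right_mono) auto
      finally show "\<phi> s * \<phi> s - p s * \<phi> s \<le> e *\<^sub>R \<bar>\<phi> s\<bar>" by simp
    qed
    also have "\<dots> = e * K" unfolding K_def by (simp only: integral_cmul) simp
    finally show ?thesis .
  qed
  have "Q \<le> 0"
  proof (rule ccontr)
    assume "\<not> Q \<le> 0"
    then have Qp: "0 < Q" by simp
    define e where "e = Q / (K + 1)"
    have e: "0 < e" using Qp K0 by (simp add: e_def)
    have "Q \<le> e * K" by (rule Qe[OF e])
    also have "\<dots> < e * (K + 1)" using e by simp
    also have "\<dots> = Q" using K0 by (simp add: e_def)
    finally show False by simp
  qed
  then have "Q = 0" using Q0 by simp
  then have "\<forall>s\<in>{0..2*pi}. \<phi> s * \<phi> s = 0"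
    using integral_eq_0_iff[of 0 "2*pi" "\<lambda>t. \<phi> t * \<phi> t"] cphi
    by (simp add: Q_def continuous_on_mult)
  then show ?thesis using t by simp
qed

end
end

theorem proposition2p6:
  fixes J :: "'h::{real_inner, complete_space} \<Rightarrow> 'h"
    and B A :: "('h \<Rightarrow>\<^sub>L 'h) set"
    and \<omega> :: "real \<Rightarrow> ('h \<Rightarrow>\<^sub>L 'h) \<Rightarrow> ('h \<Rightarrow>\<^sub>L 'h)"
  assumes "cstruct J"
    and "cstar_dyn_system J B \<omega>"
    and "maximal_abelian_inv_subalg J B \<omega> A"
  shows "commutant J A \<inter> B \<subseteq> commutant J (commutant J A)"
proof -
  have cB: "concrete_cstar J B" using assms(2) unfolding cstar_dyn_system_def by auto
  interpret D: dyn_setting J B \<omega> A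
    by (rule dyn_setting.intro[OF cstar_setting.intro[OF assms(1) cB] dyn_setting_axioms.intro[OF assms(2) assms(3)]])
  show ?thesis
  proof
    fix x assume x: "x \<in> commutant J A \<inter> B"
    have xB: "x \<in> B" using x by auto
    have xH: "x \<in> BH J" using x unfolding commutant_def by auto
    have xA: "\<And>a. a \<in> A \<Longrightarrow> x o\<^sub>L a = a o\<^sub>L x" using x unfolding commutant_def by auto
    have "x o\<^sub>L y = y o\<^sub>L x" if y: "y \<in> commutant J A" for y
    proof (rule blinfun_eqI)
      fix u
      have "\<forall>v. inner ((x o\<^sub>L y) u) v - inner ((y o\<^sub>L x) u) v = 0"
      proof
        fix v
        have "D.phi x y u v 0 = 0"
        proof (rule fourier_unique[of "D.phi x y u v" 0])
          show "continuous_on UNIV (D.phi x y u v)" by (rule D.phi_cont[OF xB xA y])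
          show "D.phi x y u v (t + 2 * pi) = D.phi x y u v t" for t by (rule D.phi_per[OF xB xA y])
          show "integral {0..2*pi} (\<lambda>t. cos (real_of_int n * t) * D.phi x y u v t) = 0" for n
            by (rule D.int_cos[OF xB xA y])
          show "integral {0..2*pi} (\<lambda>t. sin (real_of_int n * t) * D.phi x y u v t) = 0" for n
            by (rule D.int_sin[OF xB xA y])
          show "(0::real) \<in> {0..2*pi}" by simp
        qed
        then show "inner ((x o\<^sub>L y) u) v - inner ((y o\<^sub>L x) u) v = 0"
          using D.phi_0[OF xB xA y] by simp
      qed
      then have "inner ((x o\<^sub>L y) u - (y o\<^sub>L x) u) ((x o\<^sub>L y) u - (y o\<^sub>L x) u) = 0"
        by (simp add: inner_diff_left)
      then show "(x o\<^sub>L y) u = (y o\<^sub>L x) u" by simp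
    qed
    then show "x \<in> commutant J (commutant J A)" using xH unfolding commutant_def by auto
  qed
qed

end
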